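(* Fix a player $i$ of a finite extensive-form game with perfect recall, and consider the following online learner $\mathcal{R}$ over the set $\operatorname{co}\Phi^{(i)}$. It maintains one instance $\mathcal{R}_{\hat I}$ of the CFR algorithm on $Q^{(i)}_{\hat I}$ for each $\hat I\in\mathcal{I}^{(i)}$, and one instance $\mathcal{R}_\Delta$ of regret matching on the simplex $\Delta^{|\mathcal{I}^{(i)}|}$. At each time $t$: it obtains $\vec{\lambda}^t$ from $\mathcal{R}_\Delta$ and $\vec{q}^t_{\hat I}\in Q^{(i)}_{\hat I}$ from each $\mathcal{R}_{\hat I}$, and outputs $\phi^t=\sum_{\hat I}\vec{\lambda}^t[\hat I]\,\phi_{\hat I,\vec{q}^t_{\hat I}}$. Upon observing a linear utility $L^t:\operatorname{co}\Phi^{(i)}\to\mathbb{R}$, it gives each $\mathcal{R}_{\hat I}$ the linear utility $\vec{q}\mapsto L^t(\phi_{\hat I,\vec{q}})-L^t(\phi_{\hat I,\vec{0}})$ and gives $\mathcal{R}_\Delta$ the linear utility $\vec{\lambda}\mapsto\sum_{\hat I}\vec{\lambda}[\hat I]L^t(\phi_{\hat I,\vec{q}^t_{\hat I}})$. Suppose $\max_{\phi,\phi'\in\operatorname{co}\Phi^{(i)}}\{L^t(\phi)-L^t(\phi')\}\le U$ for all $t$. Then the outputs $\phi^1,\ldots,\phi^T$ satisfy $$\max_{\phi^*\in\operatorname{co}\Phi^{(i)}}\sum_{t=1}^T\big(L^t(\phi^* )-L^t(\phi^t)\big)\le 2U|\Sigma^{(i)}|\sqrt{T}.$$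
   Context: Setting: a finite game tree with players $[n]$ and chance; player $i$'s decision nodes are partitioned into information sets $\mathcal{I}^{(i)}$ with action sets $\mathscr{A}(I)$; perfect recall (all nodes of an information set share the same history of player $i$'s own actions). For $I,I'\in\mathcal{I}^{(i)}$, $I\prec I'$ if a root-to-$I'$ path passes through $I$. Sequences $\Sigma^{(i)}=\{(I,a)\}\cup\{\varnothing\}$; $\sigma^{(i)}(I)$ is the last sequence of player $i$ on the path to $I$ ($\varnothing$ if none); $\sigma\succeq I$ means $\sigma=(I',a')$ with $I'=I$ or $I\prec I'$; $\Sigma^{(i)}_I=\{\sigma:\sigma\succeq I\}$. $Q^{(i)}_I\coloneqq\{\vec{q}\in\mathbb{R}^{|\Sigma^{(i)}_I|}_{\ge0}:\sum_{a\in\mathscr{A}(I)}\vec{q}[(I,a)]=1,\ \vec{q}[\sigma^{(i)}(I')]=\sum_{a\in\mathscr{A}(I')}\vec{q}[(I',a)]\ \forall I'\succ I\}$, and $\Pi^{(i)}_I=Q^{(i)}_I\cap\{0,1\}^{|\Sigma^{(i)}_I|}$. For $\hat I\in\mathcal{I}^{(i)}$ and any vector $\vec{y}\in\mathbb{R}^{|\Sigma^{(i)}_{\hat I}|}$, $\phi_{\hat I,\vec{y}}$ is the linear map $\vec{x}\mapsto M\vec{x}$ on $\mathbb{R}^{|\Sigma^{(i)}|}$ with $M[\sigma_r,\sigma_c]=1$ if $\sigma_c\not\succeq\hat I$ and $\sigma_r=\sigma_c$; $M[\sigma_r,\sigma_c]=\vec{y}[\sigma_r]$ if $\sigma_c=\sigma^{(i)}(\hat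 I)$ and $\sigma_r\succeq\hat I$; $0$ otherwise. $\Phi^{(i)}\coloneqq\{\phi_{\hat I,\hat{\vec{\pi}}}:\hat I\in\mathcal{I}^{(i)},\hat{\vec{\pi}}\in\Pi^{(i)}_{\hat I}\}$, and $\operatorname{co}\Phi^{(i)}$ is its convex hull (so $\operatorname{co}\Phi^{(i)}=\{\sum_{\hat I}\vec{\lambda}[\hat I]\phi_{\hat I,\vec{q}_{\hat I}}:\vec{\lambda}\in\Delta^{|\mathcal{I}^{(i)}|},\vec{q}_{\hat I}\in Q^{(i)}_{\hat I}\}$). Regret matching on $\Delta^m$: with cumulative regrets $r^t[j]=\sum_{s<t}(\ell^s(\vec{e}_j)-\ell^s(\vec{x}^s))$, output $\vec{x}^t\propto[r^t]^+$ (uniform if $[r^t]^+=0$). CFR (counterfactual regret minimization, Zinkevich et al. 2008) on a tree-form sequence-form set $Q^{(i)}_I$: runs regret matching locally at each information set on counterfactual utilities and outputs the induced sequence-form strategy. Regret of an online learner on a set $\mathcal{X}$ with linear utilities $\ell^t$: $\max_{x^*\in\mathcal{X}}\sum_t(\ell^t(x^* )-\ell^t(x^t))$. *)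

theory Defs
  imports "HOL-Analysis.Analysis"
begin

text \<open>
  Player i's information-set structure (tree-form decision structure induced by
  a finite extensive-form game with perfect recall).  A sequence is ('i \<times> 'a) option,
  None being the empty sequence.  par I is sigma(I), the last own sequence on
  the path to I.  Vectors are functions seq \<Rightarrow> real, matrices seq \<Rightarrow> seq \<Rightarrow> real.
\<close>

type_synonym ('i,'a) sq = "('i \<times> 'a) option"

definition succ_rel :: "'i set \<Rightarrow> ('i \<Rightarrow> ('i,'a) sq) \<Rightarrow> ('i \<times> 'i) set" where
  "succ_rel IS par = {(J, I). I \<in> IS \<and> (\<exists>a. par I = Some (J, a))}"

definition prec :: "'i set \<Rightarrow> ('i \<Rightarrow> ('i,'a) sq) \<Rightarrow> 'i \<Rightarrow> 'i \<Rightarrow> bool" where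
  "prec IS par I I' \<longleftrightarrow> (I, I') \<in> (succ_rel IS par)\<^sup>+"

text \<open>Well-formedness: finitely many infosets, finite nonempty action sets,
  parent sequences are valid sequences, and the ancestor relation is acyclic
  (tree/forest structure implied by perfect recall).\<close>
definition tfdp :: "'i set \<Rightarrow> ('i \<Rightarrow> 'a set) \<Rightarrow> ('i \<Rightarrow> ('i,'a) sq) \<Rightarrow> bool" where
  "tfdp IS A par \<longleftrightarrow> finite IS \<and> (\<forall>I\<in>IS. finite (A I) \<and> A I \<noteq> {}) \<and>
     (\<forall>I\<in>IS. \<forall>J a. par I = Some (J, a) \<longrightarrow> J \<in> IS \<and> a \<in> A J) \<and>
     acyclic (succ_rel IS par)"

definition seqs :: "'i set \<Rightarrow> ('i \<Rightarrow> 'a set) \<Rightarrow> ('i,'a) sq set" where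
  "seqs IS A = insert None {Some (I, a) | I a. I \<in> IS \<and> a \<in> A I}"

definition seq_ge :: "'i set \<Rightarrow> ('i \<Rightarrow> ('i,'a) sq) \<Rightarrow> ('i,'a) sq \<Rightarrow> 'i \<Rightarrow> bool" where
  "seq_ge IS par s I \<longleftrightarrow> (\<exists>I' a'. s = Some (I', a') \<and> (I' = I \<or> prec IS par I I'))"

definition seqs_below :: "'i set \<Rightarrow> ('i \<Rightarrow> 'a set) \<Rightarrow> ('i \<Rightarrow> ('i,'a) sq) \<Rightarrow> 'i \<Rightarrow> ('i,'a) sq set" where
  "seqs_below IS A par I = {s \<in> seqs IS A. seq_ge IS par s I}"

text \<open>Q^(i)_I; vectors of R^{Sigma_I} are represented as functions vanishing outside Sigma_I.\<close>
definition Qset :: "'i set \<Rightarrow> ('i \<Rightarrow> 'a set) \<Rightarrow> ('i \<Rightarrow> ('i,'a) sq) \<Rightarrow> 'i \<Rightarrow> (('i,'a) sq \<Rightarrow> real) set" where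
  "Qset IS A par I = {q. (\<forall>s. s \<notin> seqs_below IS A par I \<longrightarrow> q s = 0) \<and>
      (\<forall>s\<in>seqs_below IS A par I. q s \<ge> 0) \<and>
      (\<Sum>a\<in>A I. q (Some (I, a))) = 1 \<and>
      (\<forall>I'\<in>IS. prec IS par I I' \<longrightarrow> q (par I') = (\<Sum>a\<in>A I'. q (Some (I', a))))}"

definition Piset :: "'i set \<Rightarrow> ('i \<Rightarrow> 'a set) \<Rightarrow> ('i \<Rightarrow> ('i,'a) sq) \<Rightarrow> 'i \<Rightarrow> (('i,'a) sq \<Rightarrow> real) set" where
  "Piset IS A par I = {q \<in> Qset IS A par I. \<forall>s. q s \<in> {0, 1}}"

definition phi :: "'i set \<Rightarrow> ('i \<Rightarrow> 'a set) \<Rightarrow> ('i \<Rightarrow> ('i,'a) sq) \<Rightarrow> 'i \<Rightarrow> (('i,'a) sq \<Rightarrow> real)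
                   \<Rightarrow> ('i,'a) sq \<Rightarrow> ('i,'a) sq \<Rightarrow> real" where
  "phi IS A par I y r c =
     (if r \<in> seqs IS A \<and> c \<in> seqs IS A then
        (if \<not> seq_ge IS par c I \<and> r = c then 1
         else if c = par I \<and> seq_ge IS par r I then y r
         else 0)
      else 0)"

definition Phi :: "'i set \<Rightarrow> ('i \<Rightarrow> 'a set) \<Rightarrow> ('i \<Rightarrow> ('i,'a) sq)
                   \<Rightarrow> (('i,'a) sq \<Rightarrow> ('i,'a) sq \<Rightarrow> real) set" where
  "Phi IS A par = {phi IS A par I p | I p. I \<in> IS \<and> p \<in> Piset IS A par I}"

definition coPhi :: "'i set \<Rightarrow> ('i \<Rightarrow> 'a set) \<Rightarrow> ('i \<Rightarrow> ('i,'a) sq)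
                   \<Rightarrow> (('i,'a) sq \<Rightarrow> ('i,'a) sq \<Rightarrow> real) set" where
  "coPhi IS A par = {(\<lambda>r c. \<Sum>k<n. w k * M k r c) | (n::nat) w M.
      (\<forall>k<n. w k \<ge> 0 \<and> M k \<in> Phi IS A par) \<and> (\<Sum>k<n. w k) = 1}"

text \<open>Linear utility on the space of Sigma \<times> Sigma matrices, given by its coefficient matrix G.\<close>
definition Lval :: "'i set \<Rightarrow> ('i \<Rightarrow> 'a set) \<Rightarrow> (('i,'a) sq \<Rightarrow> ('i,'a) sq \<Rightarrow> real)
                    \<Rightarrow> (('i,'a) sq \<Rightarrow> ('i,'a) sq \<Rightarrow> real) \<Rightarrow> real" where
  "Lval IS A G M = (\<Sum>r\<in>seqs IS A. \<Sum>c\<in>seqs IS A. G r c * M r c)"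

definition rm_of :: "'k set \<Rightarrow> ('k \<Rightarrow> real) \<Rightarrow> 'k \<Rightarrow> real" where
  "rm_of K r = (let S = (\<Sum>k\<in>K. max 0 (r k)) in
     (\<lambda>j. if j \<in> K then (if S = 0 then 1 / real (card K) else max 0 (r j) / S) else 0))"

definition unitv :: "'k \<Rightarrow> 'k \<Rightarrow> real" where
  "unitv j = (\<lambda>k. if k = j then 1 else 0)"

text \<open>Cumulative regrets r^t[j] = sum_{s<t} (l^s(e_j) - l^s(x^s)) of regret matching
  on K against the utility sequence l (time starts at 0).\<close>
primrec rm_cumreg :: "'k set \<Rightarrow> (nat \<Rightarrow> ('k \<Rightarrow> real) \<Rightarrow> real) \<Rightarrow> nat \<Rightarrow> 'k \<Rightarrow> real" where
  "rm_cumreg K l 0 = (\<lambda>j. 0)"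
| "rm_cumreg K l (Suc t) = (\<lambda>j. rm_cumreg K l t j + (l t (unitv j) - l t (rm_of K (rm_cumreg K l t))))"

definition rm :: "'k set \<Rightarrow> (nat \<Rightarrow> ('k \<Rightarrow> real) \<Rightarrow> real) \<Rightarrow> nat \<Rightarrow> 'k \<Rightarrow> real" where
  "rm K l t = rm_of K (rm_cumreg K l t)"

definition subI :: "'i set \<Rightarrow> ('i \<Rightarrow> ('i,'a) sq) \<Rightarrow> 'i \<Rightarrow> 'i set" where
  "subI IS par Ih = {J \<in> IS. J = Ih \<or> prec IS par Ih J}"

definition path_seqs :: "'i set \<Rightarrow> ('i \<Rightarrow> ('i,'a) sq) \<Rightarrow> 'i \<Rightarrow> 'a \<Rightarrow> ('i \<times> 'a) set" where
  "path_seqs IS par J b = insert (J, b) {s. \<exists>K. (K = J \<or> prec IS par K J) \<and> par K = Some s}"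

text \<open>Counterfactual utility of (I,a) given the gradient g and local strategies x:
  cf(I,a) = sum over sequences (J,b) \<succeq> (I,a) of g[(J,b)] times the product of
  x_K[c] over the sequences (K,c) strictly after (I,a) on the path to (J,b).
  (This is the closed form of the usual recursion
   cf(I,a) = g[(I,a)] + sum_{J child of (I,a)} sum_b x_J[b] cf(J,b).)\<close>
definition cfv :: "'i set \<Rightarrow> ('i \<Rightarrow> 'a set) \<Rightarrow> ('i \<Rightarrow> ('i,'a) sq) \<Rightarrow> (('i,'a) sq \<Rightarrow> real)
                   \<Rightarrow> ('i \<Rightarrow> 'a \<Rightarrow> real) \<Rightarrow> 'i \<Rightarrow> 'a \<Rightarrow> real" where
  "cfv IS A par g x I a =
     (\<Sum>s\<in>{(J, b). J \<in> IS \<and> b \<in> A J \<and> (I, a) \<in> path_seqs IS par J b}.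
        g (Some s) * (\<Prod>(K, c)\<in>{(K, c) \<in> path_seqs IS par (fst s) (snd s). prec IS par I K}. x K c))"

primrec cfr_reg :: "'i set \<Rightarrow> ('i \<Rightarrow> 'a set) \<Rightarrow> ('i \<Rightarrow> ('i,'a) sq) \<Rightarrow> 'i
                    \<Rightarrow> (nat \<Rightarrow> (('i,'a) sq \<Rightarrow> real) \<Rightarrow> real) \<Rightarrow> nat \<Rightarrow> 'i \<Rightarrow> 'a \<Rightarrow> real" where
  "cfr_reg IS A par Ih l 0 = (\<lambda>J a. 0)"
| "cfr_reg IS A par Ih l (Suc t) =
     (let R = cfr_reg IS A par Ih l t;
          x = (\<lambda>J. rm_of (A J) (R J));
          g = (\<lambda>s. if s \<in> seqs_below IS A par Ih then l t (unitv s) else 0);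
          cf = cfv IS A par g x
      in (\<lambda>J a. if J \<in> subI IS par Ih
                 then R J a + (cf J a - (\<Sum>b\<in>A J. x J b * cf J b)) else 0))"

definition cfr_local :: "'i set \<Rightarrow> ('i \<Rightarrow> 'a set) \<Rightarrow> ('i \<Rightarrow> ('i,'a) sq) \<Rightarrow> 'i
                    \<Rightarrow> (nat \<Rightarrow> (('i,'a) sq \<Rightarrow> real) \<Rightarrow> real) \<Rightarrow> nat \<Rightarrow> 'i \<Rightarrow> 'a \<Rightarrow> real" where
  "cfr_local IS A par Ih l t J = rm_of (A J) (cfr_reg IS A par Ih l t J)"

definition cfr_out :: "'i set \<Rightarrow> ('i \<Rightarrow> 'a set) \<Rightarrow> ('i \<Rightarrow> ('i,'a) sq) \<Rightarrow> 'i
                    \<Rightarrow> (nat \<Rightarrow> (('i,'a) sq \<Rightarrow> real) \<Rightarrow> real) \<Rightarrow> nat \<Rightarrow> ('i,'a) sq \<Rightarrow> real" where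
  "cfr_out IS A par Ih l t s =
     (if s \<in> seqs_below IS A par Ih then
        (\<Prod>(K, c)\<in>{(K, c) \<in> path_seqs IS par (fst (the s)) (snd (the s)). K \<in> subI IS par Ih}.
            cfr_local IS A par Ih l t K c)
      else 0)"

definition util_I :: "'i set \<Rightarrow> ('i \<Rightarrow> 'a set) \<Rightarrow> ('i \<Rightarrow> ('i,'a) sq)
                      \<Rightarrow> (nat \<Rightarrow> ('i,'a) sq \<Rightarrow> ('i,'a) sq \<Rightarrow> real) \<Rightarrow> 'i
                      \<Rightarrow> nat \<Rightarrow> (('i,'a) sq \<Rightarrow> real) \<Rightarrow> real" where
  "util_I IS A par G Ih t q =
     Lval IS A (G t) (phi IS A par Ih q) - Lval IS A (G t) (phi IS A par Ih (\<lambda>_. 0))"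

definition q_out :: "'i set \<Rightarrow> ('i \<Rightarrow> 'a set) \<Rightarrow> ('i \<Rightarrow> ('i,'a) sq)
                      \<Rightarrow> (nat \<Rightarrow> ('i,'a) sq \<Rightarrow> ('i,'a) sq \<Rightarrow> real) \<Rightarrow> 'i \<Rightarrow> nat \<Rightarrow> ('i,'a) sq \<Rightarrow> real" where
  "q_out IS A par G Ih t = cfr_out IS A par Ih (util_I IS A par G Ih) t"

definition util_Delta :: "'i set \<Rightarrow> ('i \<Rightarrow> 'a set) \<Rightarrow> ('i \<Rightarrow> ('i,'a) sq)
                      \<Rightarrow> (nat \<Rightarrow> ('i,'a) sq \<Rightarrow> ('i,'a) sq \<Rightarrow> real) \<Rightarrow> nat \<Rightarrow> ('i \<Rightarrow> real) \<Rightarrow> real" where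
  "util_Delta IS A par G t lam =
     (\<Sum>Ih\<in>IS. lam Ih * Lval IS A (G t) (phi IS A par Ih (q_out IS A par G Ih t)))"

definition lam_out :: "'i set \<Rightarrow> ('i \<Rightarrow> 'a set) \<Rightarrow> ('i \<Rightarrow> ('i,'a) sq)
                      \<Rightarrow> (nat \<Rightarrow> ('i,'a) sq \<Rightarrow> ('i,'a) sq \<Rightarrow> real) \<Rightarrow> nat \<Rightarrow> 'i \<Rightarrow> real" where
  "lam_out IS A par G t = rm IS (util_Delta IS A par G) t"

definition phi_out :: "'i set \<Rightarrow> ('i \<Rightarrow> 'a set) \<Rightarrow> ('i \<Rightarrow> ('i,'a) sq)
                      \<Rightarrow> (nat \<Rightarrow> ('i,'a) sq \<Rightarrow> ('i,'a) sq \<Rightarrow> real) \<Rightarrow> nat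
                      \<Rightarrow> ('i,'a) sq \<Rightarrow> ('i,'a) sq \<Rightarrow> real" where
  "phi_out IS A par G t = (\<lambda>r c. \<Sum>Ih\<in>IS. lam_out IS A par G t Ih *
                              phi IS A par Ih (q_out IS A par G Ih t) r c)"

end

theory Submission
  imports Defs "HOL-Library.FuncSet"
begin


locale tf =
  fixes IS :: "'i set" and A :: "'i \<Rightarrow> 'a set" and par :: "'i \<Rightarrow> ('i \<times> 'a) option"
  assumes tfdp: "tfdp IS A par"
begin

abbreviation "SR \<equiv> succ_rel IS par"
abbreviation "pr \<equiv> prec IS par"

lemma finIS: "finite IS" using tfdp by (simp add: tfdp_def)
lemma finA: "I \<in> IS \<Longrightarrow> finite (A I)" using tfdp by (simp add: tfdp_def)
lemma neA: "I \<in> IS \<Longrightarrow> A I \<noteq> {}" using tfdp by (simp add: tfdp_def)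
lemma parIS: "I \<in> IS \<Longrightarrow> par I = Some (J, a) \<Longrightarrow> J \<in> IS \<and> a \<in> A J"
  using tfdp by (simp add: tfdp_def)
lemma acyc: "acyclic SR" using tfdp by (simp add: tfdp_def)

lemma SR_sub: "SR \<subseteq> IS \<times> IS"
  using parIS by (auto simp: succ_rel_def)

lemma SR_iff: "(J, I) \<in> SR \<longleftrightarrow> I \<in> IS \<and> (\<exists>a. par I = Some (J, a))"
  by (simp add: succ_rel_def)

lemma wfSR: "wf SR"
  by (rule finite_acyclic_wf[OF finite_subset[OF SR_sub] acyc]) (simp add: finIS)

lemma prec_IS: "pr K J \<Longrightarrow> K \<in> IS \<and> J \<in> IS"
  unfolding prec_def using trancl_subset_Sigma[OF SR_sub] by blast

lemma prec_irrefl: "\<not> pr J J"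
  using acyc unfolding prec_def acyclic_def by blast

lemma prec_trans: "pr a b \<Longrightarrow> pr b c \<Longrightarrow> pr a c"
  unfolding prec_def by (meson trancl_trans)

lemma prec_asym: "pr a b \<Longrightarrow> pr b a \<Longrightarrow> False"
  using prec_trans prec_irrefl by blast

lemma prec_par: "J \<in> IS \<Longrightarrow> par J = Some (L, d) \<Longrightarrow> pr K J \<longleftrightarrow> (K = L \<or> pr K L)"
proof
  assume J: "J \<in> IS" "par J = Some (L, d)" and "pr K J"
  then have "(K, J) \<in> SR\<^sup>+" by (simp add: prec_def)
  then show "K = L \<or> pr K L"
  proof (cases rule: tranclE)
    case base then show ?thesis using J by (auto simp: SR_iff)
  next
    case (step c) then show ?thesis using J by (auto simp: SR_iff prec_def)
  qed
next
  assume J: "J \<in> IS" "par J = Some (L, d)" and "K = L \<or> pr K L"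
  have "(L, J) \<in> SR" using J by (auto simp: SR_iff)
  then show "pr K J" using \<open>K = L \<or> pr K L\<close> unfolding prec_def by auto
qed

lemma prec_None: "par J = None \<Longrightarrow> \<not> pr K J"
proof
  assume "par J = None" "pr K J"
  then have "(K, J) \<in> SR\<^sup>+" by (simp add: prec_def)
  then show False using \<open>par J = None\<close>
    by (cases rule: tranclE) (auto simp: SR_iff)
qed

lemma prec_parent: "J \<in> IS \<Longrightarrow> par J = Some (L, d) \<Longrightarrow> pr L J"
  using prec_par by blast

definition Rest :: "'i \<Rightarrow> ('i \<times> 'a) set" where
  "Rest J = {s. \<exists>K. (K = J \<or> pr K J) \<and> par K = Some s}"

lemma path_Rest: "path_seqs IS par J b = insert (J, b) (Rest J)"
  by (simp add: path_seqs_def Rest_def)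

lemma Rest_prec: "J \<in> IS \<Longrightarrow> (K, c) \<in> Rest J \<Longrightarrow> pr K J \<and> K \<in> IS \<and> c \<in> A K"
proof -
  assume J: "J \<in> IS" "(K, c) \<in> Rest J"
  then obtain K' where K': "K' = J \<or> pr K' J" "par K' = Some (K, c)" by (auto simp: Rest_def)
  then have "K' \<in> IS" using J prec_IS by blast
  then have "pr K K'" using K' prec_parent by blast
  then have "pr K J" using K' prec_trans by blast
  then show ?thesis using parIS[OF \<open>K' \<in> IS\<close> K'(2)] by blast
qed

lemma Rest_rec: "J \<in> IS \<Longrightarrow> Rest J = (case par J of None \<Rightarrow> {} | Some (L, d) \<Rightarrow> path_seqs IS par L d)"
proof (cases "par J")
  case None
  assume "J \<in> IS"
  then show ?thesis using None prec_None by (auto simp: Rest_def)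
next
  case (Some p)
  assume J: "J \<in> IS"
  obtain L d where p: "p = (L, d)" by fastforce
  have "Rest J = insert (L, d) (Rest L)"
    using prec_par[OF J Some[unfolded p]] Some p unfolding Rest_def by auto
  then show ?thesis using Some p by (simp add: path_Rest)
qed

lemma path_mem: "J \<in> IS \<Longrightarrow> (K, c) \<in> path_seqs IS par J b \<Longrightarrow> (K = J \<and> c = b) \<or> pr K J"
  using Rest_prec by (auto simp: path_Rest)

lemma path_valid: "J \<in> IS \<Longrightarrow> b \<in> A J \<Longrightarrow> (K, c) \<in> path_seqs IS par J b \<Longrightarrow> K \<in> IS \<and> c \<in> A K"
  using Rest_prec by (auto simp: path_Rest)

lemma Rest_fun: "J \<in> IS \<Longrightarrow> (K, c) \<in> Rest J \<Longrightarrow> (K, c') \<in> Rest J \<Longrightarrow> c = c'"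
proof (induction J rule: wf_induct[OF wfSR])
  case (1 J)
  show ?case
  proof (cases "par J")
    case None then show ?thesis using 1 Rest_rec by simp
  next
    case (Some p)
    obtain L d where p: "p = (L, d)" by fastforce
    have L: "L \<in> IS" "(L, J) \<in> SR" using parIS 1 Some p by (auto simp: SR_iff)
    have R: "Rest J = insert (L, d) (Rest L)" using Rest_rec[OF \<open>J \<in> IS\<close>] Some p path_Rest by simp
    show ?thesis
    proof (cases "K = L")
      case True
      then have "(K, c) \<notin> Rest L" "(K, c') \<notin> Rest L" using Rest_prec[OF L(1)] prec_irrefl by blast+
      then show ?thesis using 1 R True by auto
    next
      case False
      then show ?thesis using 1 R L by auto
    qed
  qed
qed

lemma path_fun: "J \<in> IS \<Longrightarrow> (K, c) \<in> path_seqs IS par J b \<Longrightarrow> (K, c') \<in> path_seqs IS par J b \<Longrightarrow> c = c'"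
  using Rest_fun Rest_prec prec_irrefl unfolding path_Rest by blast

lemma finite_Rest: "J \<in> IS \<Longrightarrow> finite (Rest J)"
proof -
  assume J: "J \<in> IS"
  have "Rest J \<subseteq> Sigma IS A" using Rest_prec[OF J] by auto
  moreover have "finite (Sigma IS A)" using finIS finA by auto
  ultimately show ?thesis by (rule finite_subset)
qed

lemma finite_path: "J \<in> IS \<Longrightarrow> finite (path_seqs IS par J b)"
  using finite_Rest path_Rest by simp

end


lemma prod_01: "finite S \<Longrightarrow> (\<forall>x\<in>S. f x \<in> {0, 1::real}) \<Longrightarrow> prod f S \<in> {0, 1}"
  by (induction S rule: finite_induct) auto

context tf begin

abbreviation "sub Ih \<equiv> subI IS par Ih"
abbreviation "SB Ih \<equiv> seqs_below IS A par Ih"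

lemma sub_IS: "J \<in> sub Ih \<Longrightarrow> J \<in> IS" by (simp add: subI_def)

lemma SB_iff: "s \<in> SB Ih \<longleftrightarrow> (\<exists>J b. s = Some (J, b) \<and> J \<in> sub Ih \<and> b \<in> A J)"
  unfolding seqs_below_def seqs_def seq_ge_def subI_def by auto

lemma SB_eq: "SB Ih = Some ` Sigma (sub Ih) A"
  using SB_iff by fastforce

lemma fin_sub: "finite (sub Ih)"
  using finIS by (simp add: subI_def)

lemma fin_Sig: "finite (Sigma (sub Ih) A)"
  using fin_sub finA sub_IS by auto

lemma fin_SB: "finite (SB Ih)"
  using fin_Sig SB_eq by simp

lemma sub_desc: "K \<in> sub Ih \<Longrightarrow> pr K K' \<Longrightarrow> K' \<in> sub Ih"
  unfolding subI_def using prec_IS prec_trans by blast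

definition P :: "'i \<Rightarrow> 'i \<Rightarrow> 'a \<Rightarrow> ('i \<times> 'a) set" where
  "P Ih J b = {(K, c) \<in> path_seqs IS par J b. K \<in> sub Ih}"

lemma fin_P: "J \<in> IS \<Longrightarrow> finite (P Ih J b)"
  unfolding P_def by (rule finite_subset[OF _ finite_path[of J b]]) auto

lemma P_Sig: "J \<in> IS \<Longrightarrow> b \<in> A J \<Longrightarrow> P Ih J b \<subseteq> Sigma (sub Ih) A"
proof
  fix x assume "J \<in> IS" "b \<in> A J" "x \<in> P Ih J b"
  then show "x \<in> Sigma (sub Ih) A" using path_valid[of J b "fst x" "snd x"] unfolding P_def by auto
qed

lemma P_root: "Ih \<in> IS \<Longrightarrow> P Ih Ih b = {(Ih, b)}"
proof -
  assume Ih: "Ih \<in> IS"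
  have "(K, c) \<in> P Ih Ih b \<Longrightarrow> (K, c) = (Ih, b)" for K c
    using path_mem[OF Ih] prec_asym unfolding P_def subI_def by blast
  moreover have "(Ih, b) \<in> P Ih Ih b" using Ih by (simp add: P_def path_Rest subI_def)
  ultimately show ?thesis by fast
qed

lemma sub_parent: "J \<in> sub Ih \<Longrightarrow> J \<noteq> Ih \<Longrightarrow>
   \<exists>L d. par J = Some (L, d) \<and> L \<in> sub Ih \<and> d \<in> A L \<and> pr L J"
proof -
  assume J: "J \<in> sub Ih" "J \<noteq> Ih"
  then have "pr Ih J" "J \<in> IS" by (auto simp: subI_def)
  then obtain L d where Ld: "par J = Some (L, d)" using prec_None by (cases "par J") auto
  then have "Ih = L \<or> pr Ih L" using prec_par \<open>pr Ih J\<close> \<open>J \<in> IS\<close> by blast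
  moreover have "L \<in> IS \<and> d \<in> A L" using parIS \<open>J \<in> IS\<close> Ld by blast
  ultimately show ?thesis using Ld prec_parent[OF \<open>J \<in> IS\<close> Ld] by (auto simp: subI_def)
qed

lemma P_rec: "J \<in> sub Ih \<Longrightarrow> par J = Some (L, d) \<Longrightarrow> J \<noteq> Ih \<Longrightarrow>
   P Ih J b = insert (J, b) (P Ih L d) \<and> (J, b) \<notin> P Ih L d"
proof -
  assume J: "J \<in> sub Ih" "par J = Some (L, d)" "J \<noteq> Ih"
  have JIS: "J \<in> IS" using J sub_IS by blast
  have "P Ih J b = insert (J, b) (P Ih L d)"
    using Rest_rec[OF JIS] J unfolding P_def path_Rest[of J b] by auto
  moreover have "(J, b) \<notin> P Ih L d"
  proof
    assume "(J, b) \<in> P Ih L d"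
    then have "(J, b) \<in> path_seqs IS par L d" by (simp add: P_def)
    moreover have "L \<in> IS" using parIS JIS J by blast
    ultimately have "J = L \<or> pr J L" using path_mem by blast
    then show False using prec_parent[OF JIS J(2)] prec_irrefl prec_asym by blast
  qed
  ultimately show ?thesis by blast
qed

definition sf :: "'i \<Rightarrow> ('i \<Rightarrow> 'a \<Rightarrow> real) \<Rightarrow> ('i \<times> 'a) option \<Rightarrow> real" where
  "sf Ih y s = (if s \<in> SB Ih then (\<Prod>(K, c)\<in>P Ih (fst (the s)) (snd (the s)). y K c) else 0)"

lemma cfr_out_sf: "cfr_out IS A par Ih l t = sf Ih (cfr_local IS A par Ih l t)"
  by (rule ext) (simp add: cfr_out_def sf_def P_def)

definition pbar :: "'i \<Rightarrow> ('i \<Rightarrow> 'a \<Rightarrow> real) \<Rightarrow> 'i \<Rightarrow> real" where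
  "pbar Ih y K = (if K = Ih then 1 else sf Ih y (par K))"

lemma sf_Some: "J \<in> sub Ih \<Longrightarrow> b \<in> A J \<Longrightarrow> sf Ih y (Some (J, b)) = (\<Prod>(K, c)\<in>P Ih J b. y K c)"
  using SB_iff by (simp add: sf_def)

lemma sf_rec: "J \<in> sub Ih \<Longrightarrow> b \<in> A J \<Longrightarrow> sf Ih y (Some (J, b)) = y J b * pbar Ih y J"
proof (cases "J = Ih")
  case True
  assume "J \<in> sub Ih" "b \<in> A J"
  then show ?thesis using True P_root sub_IS by (simp add: sf_Some pbar_def)
next
  case False
  assume J: "J \<in> sub Ih" "b \<in> A J"
  obtain L d where Ld: "par J = Some (L, d)" "L \<in> sub Ih" "d \<in> A L" using sub_parent[OF J(1) False] by blast
  note PR = P_rec[OF J(1) Ld(1) False, of b]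
  have "sf Ih y (Some (J, b)) = (\<Prod>(K, c)\<in>insert (J, b) (P Ih L d). y K c)"
    using J PR by (simp add: sf_Some)
  also have "\<dots> = y J b * (\<Prod>(K, c)\<in>P Ih L d. y K c)"
    using PR fin_P[OF sub_IS[OF Ld(2)]] by simp
  also have "\<dots> = y J b * pbar Ih y J"
    using Ld False by (simp add: pbar_def sf_Some)
  finally show ?thesis .
qed

definition beh :: "'i \<Rightarrow> ('i \<Rightarrow> 'a \<Rightarrow> real) \<Rightarrow> bool" where
  "beh Ih y \<longleftrightarrow> (\<forall>K\<in>sub Ih. (\<forall>c\<in>A K. 0 \<le> y K c) \<and> (\<Sum>c\<in>A K. y K c) = 1)"

lemma sf_nonneg: "beh Ih y \<Longrightarrow> 0 \<le> sf Ih y s"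
proof (cases "s \<in> SB Ih")
  case True
  assume b: "beh Ih y"
  then obtain J b where s: "s = Some (J, b)" "J \<in> sub Ih" "b \<in> A J" using SB_iff True by blast
  have "0 \<le> (\<Prod>(K, c)\<in>P Ih J b. y K c)"
    using P_Sig[OF sub_IS[OF s(2)] s(3)] b unfolding beh_def
    by (intro prod_nonneg) auto
  then show ?thesis using s by (simp add: sf_Some)
qed (simp add: sf_def)

lemma pbar_nonneg: "beh Ih y \<Longrightarrow> 0 \<le> pbar Ih y K"
  using sf_nonneg by (simp add: pbar_def)

lemma sf_Q: "Ih \<in> IS \<Longrightarrow> beh Ih y \<Longrightarrow> sf Ih y \<in> Qset IS A par Ih"
proof -
  assume Ih: "Ih \<in> IS" and b: "beh Ih y"
  have IhS: "Ih \<in> sub Ih" using Ih by (simp add: subI_def)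
  have 1: "\<forall>s. s \<notin> SB Ih \<longrightarrow> sf Ih y s = 0" by (simp add: sf_def)
  have 2: "(\<Sum>a\<in>A Ih. sf Ih y (Some (Ih, a))) = 1"
    using b IhS by (simp add: sf_rec pbar_def beh_def)
  have 3: "sf Ih y (par I') = (\<Sum>a\<in>A I'. sf Ih y (Some (I', a)))" if "I' \<in> IS" "pr Ih I'" for I'
  proof -
    have I': "I' \<in> sub Ih" "I' \<noteq> Ih" using that prec_irrefl by (auto simp: subI_def)
    have "(\<Sum>a\<in>A I'. sf Ih y (Some (I', a))) = (\<Sum>a\<in>A I'. y I' a) * pbar Ih y I'"
      using I' by (simp add: sf_rec sum_distrib_right)
    also have "\<dots> = sf Ih y (par I')" using b I' by (simp add: beh_def pbar_def)
    finally show ?thesis by simp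
  qed
  show ?thesis unfolding Qset_def using 1 2 3 sf_nonneg[OF b] by blast
qed

lemma sf_Pi: "Ih \<in> IS \<Longrightarrow> beh Ih y \<Longrightarrow> (\<forall>K\<in>sub Ih. \<forall>c\<in>A K. y K c \<in> {0, 1}) \<Longrightarrow> sf Ih y \<in> Piset IS A par Ih"
proof -
  assume Ih: "Ih \<in> IS" and b: "beh Ih y" and p: "\<forall>K\<in>sub Ih. \<forall>c\<in>A K. y K c \<in> {0, 1}"
  have "sf Ih y s \<in> {0, 1}" for s
  proof (cases "s \<in> SB Ih")
    case True
    then obtain J b where s: "s = Some (J, b)" "J \<in> sub Ih" "b \<in> A J" using SB_iff by blast
    have "(\<Prod>(K, c)\<in>P Ih J b. y K c) \<in> {0, 1}"
      using P_Sig[OF sub_IS[OF s(2)] s(3)] p fin_P[OF sub_IS[OF s(2)]]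
      by (intro prod_01) auto
    then show ?thesis using s by (simp add: sf_Some)
  qed (simp add: sf_def)
  then show ?thesis using sf_Q[OF Ih b] by (simp add: Piset_def)
qed

end


context tf begin

definition qbar :: "'i \<Rightarrow> (('i \<times> 'a) option \<Rightarrow> real) \<Rightarrow> 'i \<Rightarrow> real" where
  "qbar Ih \<pi> K = (if K = Ih then 1 else \<pi> (par K))"

definition below :: "'i \<Rightarrow> 'i \<Rightarrow> 'a \<Rightarrow> 'i \<Rightarrow> ('i \<times> 'a) set" where
  "below Ih J b K = {(K', c') \<in> P Ih J b. pr K K'}"

lemma tele:
  assumes Ih: "Ih \<in> IS"
  shows "J \<in> sub Ih \<Longrightarrow> b \<in> A J \<Longrightarrow> \<pi> (Some (J, b)) - sf Ih x (Some (J, b)) =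
    (\<Sum>(K, c)\<in>P Ih J b. (\<pi> (Some (K, c)) - qbar Ih \<pi> K * x K c) * (\<Prod>(K', c')\<in>below Ih J b K. x K' c'))"
proof (induction J arbitrary: b rule: wf_induct[OF wfSR])
  case (1 J)
  show ?case
  proof (cases "J = Ih")
    case True
    have "below Ih J b Ih = {}" using True P_root[OF Ih] prec_irrefl by (auto simp: below_def)
    then show ?thesis using True P_root[OF Ih] 1(2,3) by (simp add: sf_rec pbar_def qbar_def)
  next
    case False
    obtain L d where Ld: "par J = Some (L, d)" "L \<in> sub Ih" "d \<in> A L" "pr L J"
      using sub_parent[OF 1(2) False] by blast
    have JIS: "J \<in> IS" using 1(2) sub_IS by blast
    have LIS: "L \<in> IS" using Ld sub_IS by blast
    have SR: "(L, J) \<in> SR" using Ld JIS by (simp add: SR_iff)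
    note PR = P_rec[OF 1(2) Ld(1) False, of b]
    have anc: "(K, c) \<in> P Ih L d \<Longrightarrow> pr K J" for K c
      using path_mem[OF LIS, of K c d] Ld(4) prec_trans by (auto simp: P_def)
    have bJ: "below Ih J b J = {}"
    proof -
      have False if "(K', c') \<in> P Ih J b" "pr J K'" for K' c'
      proof -
        have "K' = J \<or> (K', c') \<in> P Ih L d" using that PR by auto
        then show False using that(2) anc prec_irrefl prec_asym by blast
      qed
      then show ?thesis unfolding below_def by auto
    qed
    have bK: "below Ih J b K = insert (J, b) (below Ih L d K) \<and> (J, b) \<notin> below Ih L d K"
      if "(K, c) \<in> P Ih L d" for K c
      using PR anc[OF that] by (auto simp: below_def)
    have fb: "finite (below Ih L d K)" for K
      unfolding below_def by (rule finite_subset[OF _ fin_P[OF LIS]]) auto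
    have IH: "\<pi> (Some (L, d)) - sf Ih x (Some (L, d)) =
      (\<Sum>(K, c)\<in>P Ih L d. (\<pi> (Some (K, c)) - qbar Ih \<pi> K * x K c) * (\<Prod>(K', c')\<in>below Ih L d K. x K' c'))"
      using 1(1) SR Ld by blast
    have "(\<Sum>(K, c)\<in>P Ih J b. (\<pi> (Some (K, c)) - qbar Ih \<pi> K * x K c) * (\<Prod>(K', c')\<in>below Ih J b K. x K' c'))
       = (\<pi> (Some (J, b)) - qbar Ih \<pi> J * x J b) +
         (\<Sum>(K, c)\<in>P Ih L d. (\<pi> (Some (K, c)) - qbar Ih \<pi> K * x K c) * (\<Prod>(K', c')\<in>below Ih J b K. x K' c'))"
      using PR fin_P[OF LIS] bJ by simp
    also have "(\<Sum>(K, c)\<in>P Ih L d. (\<pi> (Some (K, c)) - qbar Ih \<pi> K * x K c) * (\<Prod>(K', c')\<in>below Ih J b K. x K' c'))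
       = (\<Sum>(K, c)\<in>P Ih L d. x J b * ((\<pi> (Some (K, c)) - qbar Ih \<pi> K * x K c) * (\<Prod>(K', c')\<in>below Ih L d K. x K' c')))"
    proof (rule sum.cong[OF refl], clarify)
      fix K c assume "(K, c) \<in> P Ih L d"
      then show "(\<pi> (Some (K, c)) - qbar Ih \<pi> K * x K c) * (\<Prod>(K', c')\<in>below Ih J b K. x K' c') =
        x J b * ((\<pi> (Some (K, c)) - qbar Ih \<pi> K * x K c) * (\<Prod>(K', c')\<in>below Ih L d K. x K' c'))"
        using bK fb by simp
    qed
    also have "\<dots> = x J b * (\<pi> (Some (L, d)) - sf Ih x (Some (L, d)))"
      unfolding IH sum_distrib_left by (rule sum.cong) auto
    finally show ?thesis
      using 1(2,3) Ld False by (simp add: sf_rec pbar_def qbar_def algebra_simps)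
  qed
qed

lemma cfv_eq:
  assumes Ih: "Ih \<in> IS" and K: "K \<in> sub Ih"
    and g: "\<And>s. g s = (if s \<in> SB Ih then gg s else 0)"
  shows "cfv IS A par g x K c =
    (\<Sum>(J, b)\<in>{(J, b) \<in> Sigma (sub Ih) A. (K, c) \<in> P Ih J b}.
       gg (Some (J, b)) * (\<Prod>(K', c')\<in>below Ih J b K. x K' c'))"
proof -
  have S: "{(J, b). J \<in> IS \<and> b \<in> A J \<and> (K, c) \<in> path_seqs IS par J b} =
           {(J, b) \<in> Sigma (sub Ih) A. (K, c) \<in> P Ih J b}"
  proof (safe)
    fix J b assume J: "J \<in> IS" "b \<in> A J" "(K, c) \<in> path_seqs IS par J b"
    then have "K = J \<or> pr K J" using path_mem by blast
    then have "J \<in> sub Ih" using K sub_desc by blast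
    then show "J \<in> sub Ih" "(K, c) \<in> P Ih J b" using J K by (auto simp: P_def)
  qed (auto simp: P_def sub_IS)
  have B: "{(K', c') \<in> path_seqs IS par J b. pr K K'} = below Ih J b K" for J b
    using K sub_desc by (auto simp: below_def P_def)
  show ?thesis
    unfolding cfv_def S
    by (rule sum.cong[OF refl]) (auto simp: g B SB_iff)
qed

lemma ID_sum:
  assumes Ih: "Ih \<in> IS"
    and g: "\<And>s. g s = (if s \<in> SB Ih then gg s else 0)"
  shows "(\<Sum>s\<in>SB Ih. gg s * (\<pi> s - sf Ih x s)) =
    (\<Sum>(K, c)\<in>Sigma (sub Ih) A. (\<pi> (Some (K, c)) - qbar Ih \<pi> K * x K c) * cfv IS A par g x K c)"
proof -
  let ?S = "Sigma (sub Ih) A"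
  let ?F = "\<lambda>K c. \<pi> (Some (K, c)) - qbar Ih \<pi> K * x K c"
  let ?B = "\<lambda>J b K. (\<Prod>(K', c')\<in>below Ih J b K. x K' c')"
  have "(\<Sum>s\<in>SB Ih. gg s * (\<pi> s - sf Ih x s)) = (\<Sum>(J, b)\<in>?S. gg (Some (J, b)) * (\<pi> (Some (J, b)) - sf Ih x (Some (J, b))))"
    unfolding SB_eq by (subst sum.reindex) (auto simp: case_prod_beta)
  also have "\<dots> = (\<Sum>z\<in>?S. \<Sum>y\<in>{y. y \<in> ?S \<and> y \<in> P Ih (fst z) (snd z)}. gg (Some z) * (?F (fst y) (snd y) * ?B (fst z) (snd z) (fst y)))"
  proof (rule sum.cong[OF refl], clarify)
    fix J b assume Jb: "J \<in> sub Ih" "b \<in> A J"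
    have e: "{y. y \<in> ?S \<and> y \<in> P Ih J b} = P Ih J b" using P_Sig[OF sub_IS[OF Jb(1)] Jb(2)] by blast
    show "gg (Some (J, b)) * (\<pi> (Some (J, b)) - sf Ih x (Some (J, b))) =
      (\<Sum>y\<in>{y. y \<in> ?S \<and> y \<in> P Ih (fst (J, b)) (snd (J, b))}. gg (Some (J, b)) * (?F (fst y) (snd y) * ?B (fst (J, b)) (snd (J, b)) (fst y)))"
      unfolding fst_conv snd_conv e tele[OF Ih Jb] by (simp add: sum_distrib_left case_prod_beta)
  qed
  also have "\<dots> = (\<Sum>y\<in>?S. \<Sum>z\<in>{z. z \<in> ?S \<and> y \<in> P Ih (fst z) (snd z)}. gg (Some z) * (?F (fst y) (snd y) * ?B (fst z) (snd z) (fst y)))"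
    by (rule sum.swap_restrict[OF fin_Sig fin_Sig, where g="\<lambda>z y. gg (Some z) * (?F (fst y) (snd y) * ?B (fst z) (snd z) (fst y))" and R="\<lambda>z y. y \<in> P Ih (fst z) (snd z)"])
  also have "\<dots> = (\<Sum>(K, c)\<in>?S. ?F K c * cfv IS A par g x K c)"
  proof (rule sum.cong[OF refl])
    fix y assume y: "y \<in> ?S"
    obtain K c where yKc: "y = (K, c)" by fastforce
    have Kc: "K \<in> sub Ih" "c \<in> A K" using y yKc by auto
    have "(\<Sum>z\<in>{z. z \<in> ?S \<and> (K, c) \<in> P Ih (fst z) (snd z)}. gg (Some z) * (?F K c * ?B (fst z) (snd z) K))
       = ?F K c * cfv IS A par g x K c"
      unfolding cfv_eq[OF Ih Kc(1) g] sum_distrib_left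
      by (rule sum.cong) (auto simp: case_prod_beta)
    then show "(\<Sum>z\<in>{z. z \<in> ?S \<and> y \<in> P Ih (fst z) (snd z)}. gg (Some z) * (?F (fst y) (snd y) * ?B (fst z) (snd z) (fst y)))
       = (case y of (K, c) \<Rightarrow> ?F K c * cfv IS A par g x K c)" using yKc by simp
  qed
  finally show ?thesis .
qed

end


lemma rm_of_props:
  assumes "finite K" "K \<noteq> {}"
  shows "(\<forall>j\<in>K. 0 \<le> rm_of K r j) \<and> (\<Sum>j\<in>K. rm_of K r j) = 1"
proof -
  define S where "S = (\<Sum>k\<in>K. max 0 (r k))"
  have S0: "0 \<le> S" unfolding S_def by (intro sum_nonneg) auto
  have cK: "card K > 0" using assms by (simp add: card_gt_0_iff)
  show ?thesis
  proof (cases "S = 0")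
    case True
    then show ?thesis using cK by (simp add: rm_of_def Let_def S_def[symmetric])
  next
    case False
    then have "S > 0" using S0 by simp
    moreover have "(\<Sum>j\<in>K. max 0 (r j) / S) = 1" using False by (simp add: sum_divide_distrib[symmetric] S_def)
    ultimately show ?thesis using False by (simp add: rm_of_def Let_def S_def[symmetric])
  qed
qed

lemma rm_orth:
  assumes "finite K" "K \<noteq> {}"
  shows "(\<Sum>j\<in>K. max 0 (r j) * (c j - (\<Sum>k\<in>K. rm_of K r k * c k))) = 0"
proof -
  define S where "S = (\<Sum>k\<in>K. max 0 (r k))"
  have S0: "0 \<le> S" unfolding S_def by (intro sum_nonneg) auto
  show ?thesis
  proof (cases "S = 0")
    case True
    then have "\<forall>j\<in>K. max 0 (r j) = 0" using sum_nonneg_eq_0_iff[OF assms(1), of "\<lambda>k. max 0 (r k)"]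
      unfolding S_def by auto
    then show ?thesis by simp
  next
    case False
    have x: "rm_of K r k = max 0 (r k) / S" if "k \<in> K" for k
      using False that by (simp add: rm_of_def Let_def S_def[symmetric])
    define v where "v = (\<Sum>k\<in>K. rm_of K r k * c k)"
    have v: "v = (\<Sum>k\<in>K. max 0 (r k) * c k) / S"
      using x by (simp add: sum_divide_distrib v_def)
    have "(\<Sum>j\<in>K. max 0 (r j) * (c j - (\<Sum>k\<in>K. rm_of K r k * c k)))
       = (\<Sum>j\<in>K. max 0 (r j) * c j) - S * v"
      unfolding v_def[symmetric] by (simp add: right_diff_distrib sum_subtractf sum_distrib_right S_def)
    also have "\<dots> = (\<Sum>j\<in>K. max 0 (r j) * c j) - S * ((\<Sum>k\<in>K. max 0 (r k) * c k) / S)"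
      using v by simp
    also have "\<dots> = 0" using False by simp
    finally show ?thesis .
  qed
qed

lemma sq_step: "(max 0 (a + r))\<^sup>2 \<le> (max 0 a + (r::real))\<^sup>2"
proof (cases "a \<ge> 0")
  case True
  then show ?thesis by (cases "a + r \<ge> 0") (auto simp: max_def)
next
  case False
  show ?thesis
  proof (cases "a + r \<ge> 0")
    case True
    then have "\<bar>a + r\<bar> \<le> \<bar>r\<bar>" using False by auto
    then have "(a + r)\<^sup>2 \<le> r\<^sup>2" using abs_le_square_iff by blast
    then show ?thesis using True False by (simp add: max_def)
  next
    case False2: False
    then show ?thesis using False by (simp add: max_def)
  qed
qed

lemma rm_bound:
  fixes R c :: "nat \<Rightarrow> 'k \<Rightarrow> real"
  assumes fin: "finite K" and ne: "K \<noteq> {}"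
    and R0: "\<forall>j\<in>K. R 0 j = 0"
    and step: "\<forall>t<T. \<forall>j\<in>K. R (Suc t) j = R t j + (c t j - (\<Sum>k\<in>K. rm_of K (R t) k * c t k))"
    and rng: "\<forall>t<T. \<forall>j\<in>K. \<forall>k\<in>K. c t j - c t k \<le> D"
    and D: "0 \<le> D"
  shows "\<forall>j\<in>K. R T j \<le> D * sqrt (real (card K) * real T)"
proof -
  define Phi where "Phi t = (\<Sum>j\<in>K. (max 0 (R t j))\<^sup>2)" for t
  have main: "t \<le> T \<Longrightarrow> Phi t \<le> real t * real (card K) * D\<^sup>2" for t
  proof (induction t)
    case 0
    then show ?case using R0 by (simp add: Phi_def)
  next
    case (Suc t)
    then have tT: "t < T" by simp
    define x where "x = rm_of K (R t)"
    define v where "v = (\<Sum>k\<in>K. x k * c t k)"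
    define r where "r j = c t j - v" for j
    have xp: "(\<forall>j\<in>K. 0 \<le> x j) \<and> (\<Sum>j\<in>K. x j) = 1" unfolding x_def using rm_of_props[OF fin ne] by blast
    have rj: "\<bar>r j\<bar> \<le> D" if j: "j \<in> K" for j
    proof -
      have "(\<Sum>k\<in>K. x k * (c t j - c t k)) = (\<Sum>k\<in>K. x k) * c t j - v"
        by (simp add: v_def right_diff_distrib sum_subtractf sum_distrib_right)
      then have "r j = (\<Sum>k\<in>K. x k * (c t j - c t k))"
        using xp by (simp add: r_def)
      moreover have "(\<Sum>k\<in>K. x k * (c t j - c t k)) \<le> (\<Sum>k\<in>K. x k * D)"
        using xp rng tT j by (intro sum_mono mult_left_mono) auto
      moreover have "(\<Sum>k\<in>K. x k * (- D)) \<le> (\<Sum>k\<in>K. x k * (c t j - c t k))"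
      proof (intro sum_mono mult_left_mono)
        fix k assume "k \<in> K"
        then show "- D \<le> c t j - c t k" using rng tT j by force
      qed (use xp in auto)
      moreover have "(\<Sum>k\<in>K. x k * D) = D" "(\<Sum>k\<in>K. x k * (- D)) = - D"
        using xp by (simp_all add: sum_distrib_right[symmetric] sum_negf)
      ultimately show ?thesis by (simp add: abs_le_iff)
    qed
    have "Phi (Suc t) = (\<Sum>j\<in>K. (max 0 (R t j + r j))\<^sup>2)"
      unfolding Phi_def using step tT by (simp add: r_def v_def x_def)
    also have "\<dots> \<le> (\<Sum>j\<in>K. (max 0 (R t j) + r j)\<^sup>2)"
      by (intro sum_mono sq_step)
    also have "\<dots> = Phi t + 2 * (\<Sum>j\<in>K. max 0 (R t j) * r j) + (\<Sum>j\<in>K. (r j)\<^sup>2)"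
      unfolding Phi_def power2_sum sum.distrib sum_distrib_left by (simp add: mult.assoc)
    also have "(\<Sum>j\<in>K. max 0 (R t j) * r j) = 0"
      using rm_orth[OF fin ne, of "R t" "c t"] by (simp add: r_def v_def x_def)
    also have "(\<Sum>j\<in>K. (r j)\<^sup>2) \<le> (\<Sum>j\<in>K. D\<^sup>2)"
    proof (intro sum_mono)
      fix j assume "j \<in> K"
      then show "(r j)\<^sup>2 \<le> D\<^sup>2" using rj[of j] D by (simp add: abs_le_square_iff[symmetric])
    qed
    finally have "Phi (Suc t) \<le> Phi t + real (card K) * D\<^sup>2" by simp
    moreover have "Phi t \<le> real t * real (card K) * D\<^sup>2" using Suc tT by simp
    moreover have "real (Suc t) * real (card K) * D\<^sup>2 = real t * real (card K) * D\<^sup>2 + real (card K) * D\<^sup>2"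
      by (simp add: distrib_right)
    ultimately show ?case by linarith
  qed
  show ?thesis
  proof
    fix j assume j: "j \<in> K"
    have "(max 0 (R T j))\<^sup>2 \<le> Phi T"
      unfolding Phi_def using j fin by (intro member_le_sum) auto
    also have "\<dots> \<le> (D * sqrt (real (card K) * real T))\<^sup>2"
    proof -
      have "(D * sqrt (real (card K) * real T))\<^sup>2 = D\<^sup>2 * (real (card K) * real T)"
        by (simp add: power_mult_distrib)
      then show ?thesis using main[of T] by (simp add: mult_ac)
    qed
    finally have sq: "(max 0 (R T j))\<^sup>2 \<le> (D * sqrt (real (card K) * real T))\<^sup>2" .
    have "0 \<le> D * sqrt (real (card K) * real T)" using D by simp
    from power2_le_imp_le[OF sq this] have "max 0 (R T j) \<le> D * sqrt (real (card K) * real T)" .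
    then show "R T j \<le> D * sqrt (real (card K) * real T)" by simp
  qed
qed


lemma kuhn_gen:
  fixes y :: "'i \<Rightarrow> 'a \<Rightarrow> real"
  assumes S: "finite S" and Q: "finite Q"
    and QS: "\<And>K c. (K, c) \<in> Q \<Longrightarrow> K \<in> S \<and> c \<in> A K"
    and Qf: "\<And>K c c'. (K, c) \<in> Q \<Longrightarrow> (K, c') \<in> Q \<Longrightarrow> c = c'"
    and fA: "\<And>K. K \<in> S \<Longrightarrow> finite (A K)"
    and y1: "\<And>K. K \<in> S \<Longrightarrow> (\<Sum>a\<in>A K. y K a) = 1"
  shows "(\<Sum>f\<in>PiE S A. (\<Prod>K\<in>S. y K (f K)) * (\<Prod>(K, c)\<in>Q. (if c = f K then 1 else 0)))
         = (\<Prod>(K, c)\<in>Q. y K c)"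
proof -
  define D where "D = fst ` Q"
  define h where "h K = (THE c. (K, c) \<in> Q)" for K
  have hQ: "(K, h K) \<in> Q" if KD: "K \<in> D" for K
  proof -
    obtain c where "(K, c) \<in> Q" using KD unfolding D_def by (auto simp: image_iff)
    then show ?thesis unfolding h_def by (rule theI) (use Qf \<open>(K, c) \<in> Q\<close> in blast)
  qed
  have Qh: "c = h K" if "(K, c) \<in> Q" for K c
  proof -
    have "K \<in> D" unfolding D_def using that by (metis fst_conv image_eqI)
    then show ?thesis using Qf[OF that hQ] by blast
  qed
  have DS: "D \<subseteq> S" using QS unfolding D_def by auto
  have fD: "finite D" using Q D_def by simp
  have Qimg: "Q = (\<lambda>K. (K, h K)) ` D"
  proof
    show "Q \<subseteq> (\<lambda>K. (K, h K)) ` D"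
    proof
      fix p assume p: "p \<in> Q"
      obtain K c where "p = (K, c)" by fastforce
      then show "p \<in> (\<lambda>K. (K, h K)) ` D" using p Qh unfolding D_def by force
    qed
    show "(\<lambda>K. (K, h K)) ` D \<subseteq> Q" using hQ by auto
  qed
  have inj: "inj_on (\<lambda>K. (K, h K)) D" by (rule inj_onI) simp
  have prodQ: "(\<Prod>(K, c)\<in>Q. z K c) = (\<Prod>K\<in>D. z K (h K))" for z :: "'i \<Rightarrow> 'a \<Rightarrow> real"
    unfolding Qimg by (subst prod.reindex[OF inj]) simp
  have restr: "(\<Prod>K\<in>D. g K) = (\<Prod>K\<in>S. if K \<in> D then g K else 1)" for g :: "'i \<Rightarrow> real"
    using prod.inter_restrict[OF S, of g D] DS by (simp add: Int_absorb1)
  let ?F = "\<lambda>K a. y K a * (if K \<in> D then (if h K = a then 1 else 0) else 1)"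
  have "(\<Sum>f\<in>PiE S A. (\<Prod>K\<in>S. y K (f K)) * (\<Prod>(K, c)\<in>Q. (if c = f K then 1 else 0)))
      = (\<Sum>f\<in>PiE S A. \<Prod>K\<in>S. ?F K (f K))"
  proof (rule sum.cong[OF refl])
    fix f
    have "(\<Prod>(K, c)\<in>Q. (if c = f K then 1 else 0)) = (\<Prod>K\<in>S. if K \<in> D then (if h K = f K then 1 else 0) else (1::real))"
      unfolding prodQ restr by simp
    then show "(\<Prod>K\<in>S. y K (f K)) * (\<Prod>(K, c)\<in>Q. (if c = f K then 1 else 0)) = (\<Prod>K\<in>S. ?F K (f K))"
      by (simp add: prod.distrib)
  qed
  also have "\<dots> = (\<Prod>K\<in>S. \<Sum>a\<in>A K. ?F K a)"
    by (rule prod_sum_PiE[symmetric]) (use S fA in auto)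
  also have "\<dots> = (\<Prod>K\<in>S. if K \<in> D then y K (h K) else 1)"
  proof (rule prod.cong[OF refl])
    fix K assume K: "K \<in> S"
    show "(\<Sum>a\<in>A K. ?F K a) = (if K \<in> D then y K (h K) else 1)"
    proof (cases "K \<in> D")
      case True
      then have "h K \<in> A K" using hQ QS by blast
      then show ?thesis using True fA[OF K] by (simp add: if_distrib[of "\<lambda>x. y K _ * x"] sum.delta cong: if_cong)
    qed (simp add: y1 K)
  qed
  also have "\<dots> = (\<Prod>(K, c)\<in>Q. y K c)"
    unfolding prodQ restr ..
  finally show ?thesis .
qed

context tf begin

lemma phi_affine:
  "phi IS A par I y r c =
     (if r \<in> seqs IS A \<and> c \<in> seqs IS A \<and> \<not> seq_ge IS par c I \<and> r = c then 1 else 0) +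
     (if r \<in> seqs IS A \<and> c \<in> seqs IS A \<and> \<not> (\<not> seq_ge IS par c I \<and> r = c) \<and> c = par I \<and> seq_ge IS par r I then 1 else 0) * y r"
  by (simp add: phi_def)

lemma phi_lin:
  assumes "(\<Sum>f\<in>F. w f) = 1"
  shows "phi IS A par I (\<lambda>s. \<Sum>f\<in>F. w f * v f s) r c = (\<Sum>f\<in>F. w f * phi IS A par I (v f) r c)"
proof -
  define \<alpha> where "\<alpha> = (if r \<in> seqs IS A \<and> c \<in> seqs IS A \<and> \<not> seq_ge IS par c I \<and> r = c then 1 else (0::real))"
  define \<beta> where "\<beta> = (if r \<in> seqs IS A \<and> c \<in> seqs IS A \<and> \<not> (\<not> seq_ge IS par c I \<and> r = c) \<and> c = par I \<and> seq_ge IS par r I then 1 else (0::real))"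
  have "(\<Sum>f\<in>F. w f * (\<alpha> + \<beta> * v f r)) = (\<Sum>f\<in>F. w f) * \<alpha> + \<beta> * (\<Sum>f\<in>F. w f * v f r)"
    by (simp add: distrib_left sum.distrib sum_distrib_right sum_distrib_left mult_ac)
  then show ?thesis unfolding phi_affine[of I _ r c] \<alpha>_def[symmetric] \<beta>_def[symmetric] using assms by simp
qed

lemma coPhi_intro:
  assumes F: "finite F" and w: "\<forall>f\<in>F. 0 \<le> w f \<and> M f \<in> Phi IS A par" and w1: "(\<Sum>f\<in>F. w f) = 1"
  shows "(\<lambda>r c. \<Sum>f\<in>F. w f * M f r c) \<in> coPhi IS A par"
proof -
  obtain h where h: "bij_betw h {0..<card F} F" using ex_bij_betw_nat_finite[OF F] by blast
  have e: "(\<Sum>k<card F. g (h k)) = (\<Sum>f\<in>F. g f)" for g :: "_ \<Rightarrow> real"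
    using sum.reindex_bij_betw[OF h, of g] by (simp add: lessThan_atLeast0)
  have hF: "k < card F \<Longrightarrow> h k \<in> F" for k using h by (auto simp: bij_betw_def)
  show ?thesis
    unfolding coPhi_def
    apply (rule CollectI)
    apply (rule exI[of _ "card F"], rule exI[of _ "\<lambda>k. w (h k)"], rule exI[of _ "\<lambda>k. M (h k)"])
    using e[of w] e[of "\<lambda>f. w f * M f _ _"] w hF w1 by auto
qed

definition delta :: "('i \<Rightarrow> 'a) \<Rightarrow> 'i \<Rightarrow> 'a \<Rightarrow> real" where
  "delta f K c = (if c = f K then 1 else 0)"

lemma kuhn:
  assumes Ih: "Ih \<in> IS" and b: "beh Ih y"
  shows "phi IS A par Ih (sf Ih y) \<in> coPhi IS A par"
proof -
  let ?F = "PiE (sub Ih) A"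
  define w where "w f = (\<Prod>K\<in>sub Ih. y K (f K))" for f
  have fF: "finite ?F" using fin_sub finA sub_IS by (intro finite_PiE) auto
  have y1: "\<And>K. K \<in> sub Ih \<Longrightarrow> (\<Sum>a\<in>A K. y K a) = 1" using b by (simp add: beh_def)
  have "(\<Sum>f\<in>?F. w f) = (\<Prod>K\<in>sub Ih. \<Sum>a\<in>A K. y K a)"
    unfolding w_def by (rule prod_sum_PiE[symmetric]) (use fin_sub finA sub_IS in auto)
  also have "\<dots> = 1" using y1 by simp
  finally have w1: "(\<Sum>f\<in>?F. w f) = 1" .
  have w0: "0 \<le> w f" if "f \<in> ?F" for f
    unfolding w_def using that b by (intro prod_nonneg) (auto simp: beh_def PiE_def)
  have dPi: "sf Ih (delta f) \<in> Piset IS A par Ih" if "f \<in> ?F" for f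
  proof (rule sf_Pi[OF Ih])
    show "beh Ih (delta f)" unfolding beh_def delta_def using that finA sub_IS
      by (auto simp: PiE_def sum.delta)
  qed (auto simp: delta_def)
  have dec: "sf Ih y s = (\<Sum>f\<in>?F. w f * sf Ih (delta f) s)" for s
  proof (cases "s \<in> SB Ih")
    case True
    then obtain J b where s: "s = Some (J, b)" "J \<in> sub Ih" "b \<in> A J" using SB_iff by blast
    have JIS: "J \<in> IS" using s sub_IS by blast
    have "(\<Sum>f\<in>?F. w f * sf Ih (delta f) s) =
          (\<Sum>f\<in>?F. (\<Prod>K\<in>sub Ih. y K (f K)) * (\<Prod>(K, c)\<in>P Ih J b. (if c = f K then 1 else 0)))"
      using s by (simp add: sf_Some w_def delta_def)
    also have "\<dots> = (\<Prod>(K, c)\<in>P Ih J b. y K c)"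
    proof (rule kuhn_gen[OF fin_sub fin_P[OF JIS]])
      show "\<And>K c. (K, c) \<in> P Ih J b \<Longrightarrow> K \<in> sub Ih \<and> c \<in> A K" using P_Sig[OF JIS s(3)] by blast
      show "\<And>K c c'. (K, c) \<in> P Ih J b \<Longrightarrow> (K, c') \<in> P Ih J b \<Longrightarrow> c = c'"
        using path_fun[OF JIS] by (auto simp: P_def)
    qed (use finA sub_IS y1 in auto)
    finally show ?thesis using s by (simp add: sf_Some)
  qed (simp add: sf_def)
  have "phi IS A par Ih (sf Ih y) = phi IS A par Ih (\<lambda>s. \<Sum>f\<in>?F. w f * sf Ih (delta f) s)"
    using dec by presburger
  also have "\<dots> = (\<lambda>r c. \<Sum>f\<in>?F. w f * phi IS A par Ih (sf Ih (delta f)) r c)"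
    by (intro ext) (rule phi_lin[OF w1])
  moreover have "(\<lambda>r c. \<Sum>f\<in>?F. w f * phi IS A par Ih (sf Ih (delta f)) r c) \<in> coPhi IS A par"
  proof (rule coPhi_intro[OF fF _ w1])
    show "\<forall>f\<in>?F. 0 \<le> w f \<and> phi IS A par Ih (sf Ih (delta f)) \<in> Phi IS A par"
      using w0 dPi Ih unfolding Phi_def by blast
  qed
  ultimately show ?thesis by simp
qed

end


context tf begin

lemma qbar_pbar: "qbar Ih (sf Ih y) = pbar Ih y"
  by (rule ext) (simp add: qbar_def pbar_def)

definition yv :: "'i \<Rightarrow> 'a \<Rightarrow> ('i \<Rightarrow> 'a \<Rightarrow> real) \<Rightarrow> 'i \<Rightarrow> 'a \<Rightarrow> real" where
  "yv K a x K' c = (if K' = K then (if c = a then 1 else 0)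
     else if (\<exists>c'. (K', c') \<in> Rest K) then (if (K', c) \<in> Rest K then 1 else 0) else x K' c)"

lemma yv_K: "yv K a x K c = (if c = a then 1 else 0)"
  unfolding yv_def by simp

lemma yv_anc: "K' \<noteq> K \<Longrightarrow> (K', c0) \<in> Rest K \<Longrightarrow> yv K a x K' c = (if (K', c) \<in> Rest K then 1 else 0)"
  unfolding yv_def by auto

lemma yv_oth: "K' \<noteq> K \<Longrightarrow> \<not> (\<exists>c'. (K', c') \<in> Rest K) \<Longrightarrow> yv K a x K' c = x K' c"
  unfolding yv_def by auto

lemma yv_beh:
  assumes K: "K \<in> sub Ih" and a: "a \<in> A K" and x: "beh Ih x"
  shows "beh Ih (yv K a x)"
  unfolding beh_def
proof
  fix K' assume K': "K' \<in> sub Ih"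
  have KIS: "K \<in> IS" "K' \<in> IS" using K K' sub_IS by auto
  show "(\<forall>c\<in>A K'. 0 \<le> yv K a x K' c) \<and> (\<Sum>c\<in>A K'. yv K a x K' c) = 1"
  proof (cases "K' = K")
    case True
    have "(\<Sum>c\<in>A K'. yv K a x K' c) = (\<Sum>c\<in>A K. if c = a then 1 else 0)"
      unfolding True yv_K ..
    also have "\<dots> = 1" using a finA[OF KIS(1)] by simp
    finally show ?thesis unfolding True yv_K by simp
  next
    case False
    show ?thesis
    proof (cases "\<exists>c'. (K', c') \<in> Rest K")
      case True
      then obtain c0 where c0: "(K', c0) \<in> Rest K" by blast
      then have c0A: "c0 \<in> A K'" using Rest_prec[OF KIS(1)] by blast
      have e: "yv K a x K' c = (if c = c0 then 1 else 0)" for c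
      proof -
        have "(K', c) \<in> Rest K \<longleftrightarrow> c = c0" using Rest_fun[OF KIS(1) c0] c0 by blast
        then show ?thesis unfolding yv_anc[OF False c0] by simp
      qed
      have "(\<Sum>c\<in>A K'. yv K a x K' c) = (\<Sum>c\<in>A K'. if c = c0 then 1 else 0)"
        unfolding e ..
      also have "\<dots> = 1" using c0A finA[OF KIS(2)] by simp
      finally show ?thesis unfolding e by simp
    next
      case False2: False
      have "(\<forall>c\<in>A K'. 0 \<le> x K' c) \<and> (\<Sum>c\<in>A K'. x K' c) = 1"
        using x K' unfolding beh_def by (rule bspec)
      then show ?thesis unfolding yv_oth[OF False False2] .
    qed
  qed
qed

lemma pbar_yv_K:
  assumes K: "K \<in> sub Ih"
  shows "pbar Ih (yv K a x) K = 1"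
proof (cases "K = Ih")
  case False
  obtain L d where Ld: "par K = Some (L, d)" "L \<in> sub Ih" "d \<in> A L" "pr L K"
    using sub_parent[OF K False] by blast
  have KIS: "K \<in> IS" using K sub_IS by blast
  have LIS: "L \<in> IS" using Ld sub_IS by blast
  have RK: "Rest K = path_seqs IS par L d" using Rest_rec[OF KIS] Ld by simp
  have "(\<Prod>(K'', c'')\<in>P Ih L d. yv K a x K'' c'') = (\<Prod>(K'', c'')\<in>P Ih L d. 1)"
  proof (rule prod.cong[OF refl], clarify)
    fix K'' c'' assume "(K'', c'') \<in> P Ih L d"
    then have m: "(K'', c'') \<in> Rest K" using RK by (simp add: P_def)
    then have "K'' \<noteq> K" using Rest_prec[OF KIS] prec_irrefl by blast
    then show "yv K a x K'' c'' = 1" using m by (auto simp: yv_def)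
  qed
  then show ?thesis using False Ld by (simp add: pbar_def sf_Some)
qed (simp add: pbar_def)

lemma pbar_yv_anc:
  assumes K: "K \<in> sub Ih" and K': "K' \<in> sub Ih" and anc: "(K', c0) \<in> Rest K"
  shows "pbar Ih (yv K a x) K' = pbar Ih (yv K b x) K'"
proof (cases "K' = Ih")
  case False
  obtain L d where Ld: "par K' = Some (L, d)" "L \<in> sub Ih" "d \<in> A L" "pr L K'"
    using sub_parent[OF K' False] by blast
  have KIS: "K \<in> IS" using K sub_IS by blast
  have K'IS: "K' \<in> IS" using K' sub_IS by blast
  have LIS: "L \<in> IS" using Ld sub_IS by blast
  have pK'K: "pr K' K" using Rest_prec[OF KIS anc] by blast
  have "(\<Prod>(K'', c'')\<in>P Ih L d. yv K a x K'' c'') = (\<Prod>(K'', c'')\<in>P Ih L d. yv K b x K'' c'')"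
  proof (rule prod.cong[OF refl], clarify)
    fix K'' c'' assume "(K'', c'') \<in> P Ih L d"
    then have "K'' = L \<or> pr K'' L" using path_mem[OF LIS] by (auto simp: P_def)
    then have "pr K'' K'" using prec_par[OF K'IS Ld(1)] by blast
    then have "pr K'' K" using pK'K prec_trans by blast
    then have "K'' \<noteq> K" using prec_irrefl by blast
    then show "yv K a x K'' c'' = yv K b x K'' c''" by (simp add: yv_def)
  qed
  then show ?thesis using False Ld by (simp add: pbar_def sf_Some)
qed (simp add: pbar_def)

lemma cf_diff:
  assumes Ih: "Ih \<in> IS" and g: "\<And>s. g s = (if s \<in> SB Ih then gg s else 0)"
    and K: "K \<in> sub Ih" and a: "a \<in> A K" and b: "b \<in> A K"
  shows "cfv IS A par g x K a - cfv IS A par g x K b =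
    (\<Sum>s\<in>SB Ih. gg s * (sf Ih (yv K a x) s - sf Ih (yv K b x) s))"
proof -
  let ?S = "Sigma (sub Ih) A"
  let ?cf = "cfv IS A par g x"
  let ?ya = "yv K a x" and ?yb = "yv K b x"
  let ?Br = "\<lambda>y K' c'. (sf Ih y (Some (K', c')) - qbar Ih (sf Ih y) K' * x K' c') * ?cf K' c'"
  have KIS: "K \<in> IS" using K sub_IS by blast
  have "(\<Sum>s\<in>SB Ih. gg s * (sf Ih ?ya s - sf Ih ?yb s)) =
        (\<Sum>s\<in>SB Ih. gg s * (sf Ih ?ya s - sf Ih x s)) - (\<Sum>s\<in>SB Ih. gg s * (sf Ih ?yb s - sf Ih x s))"
    unfolding sum_subtractf[symmetric] by (rule sum.cong) (auto simp: algebra_simps)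
  also have "\<dots> = (\<Sum>(K', c')\<in>?S. ?Br ?ya K' c') - (\<Sum>(K', c')\<in>?S. ?Br ?yb K' c')"
    unfolding ID_sum[OF Ih g] ..
  also have "\<dots> = (\<Sum>(K', c')\<in>?S. ?Br ?ya K' c' - ?Br ?yb K' c')"
    by (simp add: sum_subtractf[symmetric] case_prod_beta)
  also have "\<dots> = (\<Sum>K'\<in>sub Ih. \<Sum>c'\<in>A K'. ?Br ?ya K' c' - ?Br ?yb K' c')"
    by (subst sum.Sigma[symmetric]) (use fin_sub finA sub_IS in auto)
  also have "\<dots> = (\<Sum>K'\<in>sub Ih. if K' = K then ?cf K a - ?cf K b else 0)"
  proof (rule sum.cong[OF refl])
    fix K' assume K': "K' \<in> sub Ih"
    have K'IS: "K' \<in> IS" using K' sub_IS by blast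
    have brg: "?Br y K'' c' = pbar Ih y K'' * (y K'' c' - x K'' c') * ?cf K'' c'" if "K'' \<in> sub Ih" "c' \<in> A K''" for y c' K''
      using sf_rec[OF that] by (simp add: qbar_pbar algebra_simps)
    have br: "?Br y K' c' = pbar Ih y K' * (y K' c' - x K' c') * ?cf K' c'" if "c' \<in> A K'" for y c'
      using brg[OF K' that] .
    show "(\<Sum>c'\<in>A K'. ?Br ?ya K' c' - ?Br ?yb K' c') = (if K' = K then ?cf K a - ?cf K b else 0)"
    proof (cases "K' = K")
      case True
      have "(\<Sum>c'\<in>A K'. ?Br ?ya K' c' - ?Br ?yb K' c') =
            (\<Sum>c'\<in>A K. (if c' = a then ?cf K c' else 0) - (if c' = b then ?cf K c' else 0))"
      proof (rule sum.cong)
        fix c' assume c': "c' \<in> A K"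
        show "?Br ?ya K' c' - ?Br ?yb K' c' = (if c' = a then ?cf K c' else 0) - (if c' = b then ?cf K c' else 0)"
          unfolding True brg[OF K c'] yv_K pbar_yv_K[OF K] by (simp add: algebra_simps)
      qed (simp add: True)
      also have "\<dots> = ?cf K a - ?cf K b"
        using a b finA[OF KIS] by (simp add: sum_subtractf)
      finally show ?thesis using True by simp
    next
      case False
      have eqB: "?Br ?ya K' c' = ?Br ?yb K' c'" if c': "c' \<in> A K'" for c'
      proof (cases "\<exists>c0. (K', c0) \<in> Rest K")
        case True
        then obtain c0 where "(K', c0) \<in> Rest K" by blast
        then have "pbar Ih ?ya K' = pbar Ih ?yb K'" using pbar_yv_anc[OF K K'] by blast
        moreover have "?ya K' c' = ?yb K' c'" using False by (simp add: yv_def)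
        ultimately show ?thesis unfolding br[OF c'] by simp
      next
        case False2: False
        then show ?thesis unfolding br[OF c'] yv_oth[OF False False2] by simp
      qed
      have "(\<Sum>c'\<in>A K'. ?Br ?ya K' c' - ?Br ?yb K' c') = (\<Sum>c'\<in>A K'. 0)"
      proof (rule sum.cong[OF refl])
        fix c' assume c': "c' \<in> A K'"
        show "?Br ?ya K' c' - ?Br ?yb K' c' = 0" unfolding eqB[OF c'] by (rule diff_self)
      qed
      then show ?thesis using False by simp
    qed
  qed
  also have "\<dots> = ?cf K a - ?cf K b" using K fin_sub by simp
  finally show ?thesis by simp
qed

end


context tf begin

lemma cfr_local_eta: "cfr_local IS A par Ih l t = (\<lambda>J. rm_of (A J) (cfr_reg IS A par Ih l t J))"
  by (rule ext) (simp add: cfr_local_def)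

definition gT :: "'i \<Rightarrow> (nat \<Rightarrow> (('i \<times> 'a) option \<Rightarrow> real) \<Rightarrow> real) \<Rightarrow> nat \<Rightarrow> ('i \<times> 'a) option \<Rightarrow> real" where
  "gT Ih l t s = (if s \<in> SB Ih then l t (unitv s) else 0)"

lemma reg_step:
  assumes "J \<in> sub Ih"
  shows "cfr_reg IS A par Ih l (Suc t) J a = cfr_reg IS A par Ih l t J a +
     (cfv IS A par (gT Ih l t) (cfr_local IS A par Ih l t) J a -
      (\<Sum>b\<in>A J. cfr_local IS A par Ih l t J b * cfv IS A par (gT Ih l t) (cfr_local IS A par Ih l t) J b))"
  using assms unfolding cfr_local_eta by (simp add: Let_def gT_def[abs_def])

lemma local_beh: "beh Ih (cfr_local IS A par Ih l t)"
  unfolding beh_def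
proof
  fix K assume "K \<in> sub Ih"
  then have KIS: "K \<in> IS" using sub_IS by blast
  from rm_of_props[OF finA[OF KIS] neA[OF KIS], of "cfr_reg IS A par Ih l t K"]
  show "(\<forall>c\<in>A K. 0 \<le> cfr_local IS A par Ih l t K c) \<and> (\<Sum>c\<in>A K. cfr_local IS A par Ih l t K c) = 1"
    unfolding cfr_local_def .
qed

lemma l_unit:
  assumes lin: "\<And>y. l y = (\<Sum>s\<in>SB Ih. gg s * y s)" and s: "s \<in> SB Ih"
  shows "l (unitv s) = gg s"
proof -
  have "l (unitv s) = (\<Sum>r\<in>SB Ih. if r = s then gg r else 0)"
    unfolding lin unitv_def by (rule sum.cong) auto
  also have "\<dots> = gg s" using s fin_SB by simp
  finally show ?thesis .
qed

lemma gT_eq: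
  assumes lin: "\<And>t y. l t y = (\<Sum>s\<in>SB Ih. gg t s * y s)"
  shows "gT Ih l t s = (if s \<in> SB Ih then gg t s else 0)"
  using l_unit[of "l t" "gg t", OF lin] by (simp add: gT_def)

lemma regret_eq:
  assumes Ih: "Ih \<in> IS" and lin: "\<And>t y. l t y = (\<Sum>s\<in>SB Ih. gg t s * y s)"
  shows "l t \<pi> - l t (cfr_out IS A par Ih l t) =
    (\<Sum>(K, c)\<in>Sigma (sub Ih) A. (\<pi> (Some (K, c)) - qbar Ih \<pi> K * cfr_local IS A par Ih l t K c) *
        cfv IS A par (gT Ih l t) (cfr_local IS A par Ih l t) K c)"
proof -
  have "l t \<pi> - l t (cfr_out IS A par Ih l t) = (\<Sum>s\<in>SB Ih. gg t s * (\<pi> s - sf Ih (cfr_local IS A par Ih l t) s))"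
    unfolding lin cfr_out_sf sum_subtractf[symmetric] right_diff_distrib ..
  also have "\<dots> = (\<Sum>(K, c)\<in>Sigma (sub Ih) A. (\<pi> (Some (K, c)) - qbar Ih \<pi> K * cfr_local IS A par Ih l t K c) *
        cfv IS A par (gT Ih l t) (cfr_local IS A par Ih l t) K c)" by (rule ID_sum[OF Ih gT_eq[OF lin]])
  finally show ?thesis .
qed

lemma Pi_props:
  assumes Ih: "Ih \<in> IS" and pi: "\<pi> \<in> Piset IS A par Ih" and K: "K \<in> sub Ih"
  shows "(\<Sum>c\<in>A K. \<pi> (Some (K, c))) = qbar Ih \<pi> K" "0 \<le> qbar Ih \<pi> K" "qbar Ih \<pi> K \<le> 1"
    "\<And>s. 0 \<le> \<pi> s"
proof -
  have Q: "\<pi> \<in> Qset IS A par Ih" and b: "\<And>s. \<pi> s \<in> {0, 1}" using pi by (auto simp: Piset_def)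
  show "(\<Sum>c\<in>A K. \<pi> (Some (K, c))) = qbar Ih \<pi> K"
  proof (cases "K = Ih")
    case True then show ?thesis using Q by (simp add: Qset_def qbar_def)
  next
    case False
    then have "pr Ih K" "K \<in> IS" using K by (auto simp: subI_def)
    then show ?thesis using Q False by (simp add: Qset_def qbar_def)
  qed
  show "0 \<le> qbar Ih \<pi> K" "qbar Ih \<pi> K \<le> 1" using b[of "par K"] by (auto simp: qbar_def)
  show "\<And>s. 0 \<le> \<pi> s" using b by (metis insert_iff order_refl singletonD zero_le_one)
qed

lemma cfr_bound:
  assumes Ih: "Ih \<in> IS" and lin: "\<And>t y. l t y = (\<Sum>s\<in>SB Ih. gg t s * y s)"
    and pi: "\<pi> \<in> Piset IS A par Ih" and D: "0 \<le> D"
    and rng: "\<forall>t<T. \<forall>K\<in>sub Ih. \<forall>a\<in>A K. \<forall>b\<in>A K.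
       cfv IS A par (gT Ih l t) (cfr_local IS A par Ih l t) K a -
       cfv IS A par (gT Ih l t) (cfr_local IS A par Ih l t) K b \<le> D"
  shows "(\<Sum>t<T. l t \<pi> - l t (cfr_out IS A par Ih l t)) \<le> (\<Sum>K\<in>sub Ih. D * sqrt (real (card (A K)) * real T))"
proof -
  let ?x = "cfr_local IS A par Ih l"
  let ?cf = "\<lambda>t. cfv IS A par (gT Ih l t) (?x t)"
  let ?R = "cfr_reg IS A par Ih l"
  have per: "(\<Sum>c\<in>A K. (\<pi> (Some (K, c)) - qbar Ih \<pi> K * ?x t K c) * ?cf t K c) =
             (\<Sum>c\<in>A K. \<pi> (Some (K, c)) * (?R (Suc t) K c - ?R t K c))" if K: "K \<in> sub Ih" for K t
  proof -
    define V where "V = (\<Sum>b\<in>A K. ?x t K b * ?cf t K b)"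
    have "(\<Sum>c\<in>A K. (\<pi> (Some (K, c)) - qbar Ih \<pi> K * ?x t K c) * ?cf t K c) =
          (\<Sum>c\<in>A K. \<pi> (Some (K, c)) * ?cf t K c) - qbar Ih \<pi> K * V"
      unfolding V_def by (simp add: left_diff_distrib sum_subtractf sum_distrib_left mult.assoc)
    also have "\<dots> = (\<Sum>c\<in>A K. \<pi> (Some (K, c)) * ?cf t K c) - (\<Sum>c\<in>A K. \<pi> (Some (K, c))) * V"
      using Pi_props(1)[OF Ih pi K] by simp
    also have "\<dots> = (\<Sum>c\<in>A K. \<pi> (Some (K, c)) * (?cf t K c - V))"
      by (simp add: right_diff_distrib sum_subtractf sum_distrib_right)
    also have "\<dots> = (\<Sum>c\<in>A K. \<pi> (Some (K, c)) * (?R (Suc t) K c - ?R t K c))"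
      using reg_step[OF K] unfolding V_def by simp
    finally show ?thesis .
  qed
  have bnd: "\<forall>j\<in>A K. ?R T K j \<le> D * sqrt (real (card (A K)) * real T)" if K: "K \<in> sub Ih" for K
  proof (rule rm_bound[where c="\<lambda>t. ?cf t K"])
    have KIS: "K \<in> IS" using K sub_IS by blast
    show "finite (A K)" "A K \<noteq> {}" using finA[OF KIS] neA[OF KIS] by auto
    show "\<forall>j\<in>A K. ?R 0 K j = 0" by simp
    show "\<forall>t<T. \<forall>j\<in>A K. ?R (Suc t) K j = ?R t K j + (?cf t K j - (\<Sum>k\<in>A K. rm_of (A K) (?R t K) k * ?cf t K k))"
      using reg_step[OF K] by (simp add: cfr_local_def)
    show "\<forall>t<T. \<forall>j\<in>A K. \<forall>k\<in>A K. ?cf t K j - ?cf t K k \<le> D" using rng K by blast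
  qed (rule D)
  have "(\<Sum>t<T. l t \<pi> - l t (cfr_out IS A par Ih l t)) =
        (\<Sum>t<T. \<Sum>K\<in>sub Ih. \<Sum>c\<in>A K. (\<pi> (Some (K, c)) - qbar Ih \<pi> K * ?x t K c) * ?cf t K c)"
  proof (rule sum.cong[OF refl])
    fix t
    have "(\<Sum>K\<in>sub Ih. \<Sum>c\<in>A K. (\<pi> (Some (K, c)) - qbar Ih \<pi> K * ?x t K c) * ?cf t K c) =
          (\<Sum>(K, c)\<in>Sigma (sub Ih) A. (\<pi> (Some (K, c)) - qbar Ih \<pi> K * ?x t K c) * ?cf t K c)"
      by (rule sum.Sigma) (use fin_sub finA sub_IS in auto)
    then show "l t \<pi> - l t (cfr_out IS A par Ih l t) =
          (\<Sum>K\<in>sub Ih. \<Sum>c\<in>A K. (\<pi> (Some (K, c)) - qbar Ih \<pi> K * ?x t K c) * ?cf t K c)"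
      using regret_eq[OF Ih lin, where t=t and \<pi>=\<pi>] by simp
  qed
  also have "\<dots> = (\<Sum>t<T. \<Sum>K\<in>sub Ih. \<Sum>c\<in>A K. \<pi> (Some (K, c)) * (?R (Suc t) K c - ?R t K c))"
  proof (rule sum.cong[OF refl])
    fix t
    show "(\<Sum>K\<in>sub Ih. \<Sum>c\<in>A K. (\<pi> (Some (K, c)) - qbar Ih \<pi> K * ?x t K c) * ?cf t K c) =
          (\<Sum>K\<in>sub Ih. \<Sum>c\<in>A K. \<pi> (Some (K, c)) * (?R (Suc t) K c - ?R t K c))"
      by (rule sum.cong[OF refl], rule per, assumption)
  qed
  also have "\<dots> = (\<Sum>K\<in>sub Ih. \<Sum>c\<in>A K. \<pi> (Some (K, c)) * (\<Sum>t<T. ?R (Suc t) K c - ?R t K c))"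
    by (simp add: sum_distrib_left sum.swap[of _ "{..<T}"])
  also have "\<dots> = (\<Sum>K\<in>sub Ih. \<Sum>c\<in>A K. \<pi> (Some (K, c)) * ?R T K c)"
  proof -
    have tel: "(\<Sum>t<T. ?R (Suc t) K c - ?R t K c) = ?R T K c" for K c
      using sum_lessThan_telescope[of "\<lambda>t. ?R t K c" T] by (simp del: cfr_reg.simps(2))
    show ?thesis unfolding tel ..
  qed
  also have "\<dots> \<le> (\<Sum>K\<in>sub Ih. \<Sum>c\<in>A K. \<pi> (Some (K, c)) * (D * sqrt (real (card (A K)) * real T)))"
    using bnd Pi_props(4)[OF Ih pi] by (intro sum_mono mult_left_mono) auto
  also have "\<dots> = (\<Sum>K\<in>sub Ih. qbar Ih \<pi> K * (D * sqrt (real (card (A K)) * real T)))"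
    using Pi_props(1)[OF Ih pi] by (simp add: sum_distrib_right[symmetric])
  also have "\<dots> \<le> (\<Sum>K\<in>sub Ih. D * sqrt (real (card (A K)) * real T))"
  proof (intro sum_mono)
    fix K assume K: "K \<in> sub Ih"
    show "qbar Ih \<pi> K * (D * sqrt (real (card (A K)) * real T)) \<le> D * sqrt (real (card (A K)) * real T)"
      using Pi_props(2,3)[OF Ih pi K] D by (simp add: mult_left_le_one_le)
  qed
  finally show ?thesis .
qed

end


lemma sqrt_nat_le: "sqrt (real n) \<le> real n"
proof (cases "n = 0")
  case False
  then have "1 \<le> sqrt (real n)" by simp
  then have "sqrt (real n) * 1 \<le> sqrt (real n) * sqrt (real n)" by (intro mult_left_mono) auto
  then show ?thesis by simp
qed simp

context tf begin

lemma fin_seqs: "finite (seqs IS A)"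
proof -
  have "seqs IS A = insert None (Some ` Sigma IS A)" unfolding seqs_def by auto
  then show ?thesis using finIS finA by simp
qed

lemma par_seqs: "I \<in> IS \<Longrightarrow> par I \<in> seqs IS A"
  using parIS by (cases "par I") (auto simp: seqs_def)

lemma SB_sub: "SB Ih \<subseteq> seqs IS A" by (auto simp: seqs_below_def)

lemma Lval_lin: "finite S \<Longrightarrow> Lval IS A G (\<lambda>r c. \<Sum>k\<in>S. w k * M k r c) = (\<Sum>k\<in>S. w k * Lval IS A G (M k))"
  unfolding Lval_def sum_distrib_left
  by (simp add: sum_distrib_left sum.swap[of _ S] mult_ac)

lemma util_lin:
  assumes Ih: "Ih \<in> IS"
  shows "util_I IS A par G Ih t y = (\<Sum>r\<in>SB Ih. G t r (par Ih) * y r)"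
proof -
  have d: "phi IS A par Ih y r c - phi IS A par Ih (\<lambda>_. 0) r c =
           (if r \<in> seqs IS A \<and> c = par Ih \<and> seq_ge IS par r Ih then y r else 0)" if c: "c \<in> seqs IS A" for r c
  proof (cases "r \<in> seqs IS A \<and> c = par Ih \<and> seq_ge IS par r Ih")
    case True
    then have "\<not> (\<not> seq_ge IS par c Ih \<and> r = c)" by auto
    then show ?thesis using True c unfolding phi_def by auto
  next
    case False
    then show ?thesis using c unfolding phi_def by auto
  qed
  have "util_I IS A par G Ih t y = (\<Sum>r\<in>seqs IS A. \<Sum>c\<in>seqs IS A. G t r c * (phi IS A par Ih y r c - phi IS A par Ih (\<lambda>_. 0) r c))"
    unfolding util_I_def Lval_def sum_subtractf[symmetric] right_diff_distrib ..
  also have "\<dots> = (\<Sum>r\<in>seqs IS A. \<Sum>c\<in>seqs IS A. if c = par Ih then (if seq_ge IS par r Ih then G t r c * y r else 0) else 0)"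
  proof (intro sum.cong refl)
    fix r c assume "r \<in> seqs IS A" "c \<in> seqs IS A"
    then show "G t r c * (phi IS A par Ih y r c - phi IS A par Ih (\<lambda>_. 0) r c) =
      (if c = par Ih then (if seq_ge IS par r Ih then G t r c * y r else 0) else 0)"
      unfolding d[OF \<open>c \<in> seqs IS A\<close>] by auto
  qed
  also have "\<dots> = (\<Sum>r\<in>seqs IS A. if seq_ge IS par r Ih then G t r (par Ih) * y r else 0)"
    using fin_seqs par_seqs[OF Ih] by (simp add: sum.delta')
  also have "\<dots> = (\<Sum>r\<in>SB Ih. G t r (par Ih) * y r)"
    unfolding seqs_below_def by (rule sum.inter_filter[OF fin_seqs, symmetric])
  finally show ?thesis .
qed

lemma card_SB: "card (SB Ih) = (\<Sum>K\<in>sub Ih. card (A K))"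
proof -
  have "card (SB Ih) = card (Sigma (sub Ih) A)" unfolding SB_eq by (rule card_image) simp
  also have "\<dots> = (\<Sum>K\<in>sub Ih. card (A K))" using fin_sub finA sub_IS by simp
  finally show ?thesis .
qed

lemma card_SB_le: "card (SB Ih) \<le> card (seqs IS A)"
  by (rule card_mono[OF fin_seqs SB_sub])

lemma card_IS_le: "card IS \<le> card (seqs IS A)"
proof -
  have "card IS = (\<Sum>I\<in>IS. 1)" by simp
  also have "\<dots> \<le> (\<Sum>I\<in>IS. card (A I))"
    using finA neA by (intro sum_mono) (simp add: Suc_leI card_gt_0_iff)
  also have "\<dots> = card (Sigma IS A)" using finIS finA by simp
  also have "\<dots> = card (Some ` Sigma IS A)" by (rule card_image[symmetric]) simp
  also have "\<dots> \<le> card (seqs IS A)" by (rule card_mono[OF fin_seqs]) (auto simp: seqs_def)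
  finally show ?thesis .
qed

lemma sum_sqrt_le:
  assumes U: "0 \<le> U"
  shows "(\<Sum>K\<in>sub Ih. U * sqrt (real (card (A K)) * real T)) \<le> U * real (card (SB Ih)) * sqrt (real T)"
proof -
  have "(\<Sum>K\<in>sub Ih. U * sqrt (real (card (A K)) * real T)) \<le> (\<Sum>K\<in>sub Ih. U * (real (card (A K)) * sqrt (real T)))"
    using U sqrt_nat_le by (intro sum_mono mult_left_mono) (auto simp: real_sqrt_mult mult_right_mono)
  also have "\<dots> = U * real (card (SB Ih)) * sqrt (real T)"
    unfolding card_SB by (simp add: sum_distrib_left sum_distrib_right mult_ac)
  finally show ?thesis .
qed

end


context tf begin

lemma per_bound:
  assumes I: "I \<in> IS" and pi: "\<pi> \<in> Piset IS A par I" and U: "0 \<le> U"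
    and hyp: "\<forall>t<T. \<forall>\<phi>\<in>coPhi IS A par. \<forall>\<phi>'\<in>coPhi IS A par. Lval IS A (G t) \<phi> - Lval IS A (G t) \<phi>' \<le> U"
  shows "(\<Sum>t<T. Lval IS A (G t) (phi IS A par I \<pi>) - Lval IS A (G t) (phi_out IS A par G t))
           \<le> 2 * U * real (card (seqs IS A)) * sqrt (real T)"
proof -
  let ?l = "util_I IS A par G I"
  define gg where "gg t r = G t r (par I)" for t r
  have lin: "\<And>t y. ?l t y = (\<Sum>s\<in>SB I. gg t s * y s)" unfolding gg_def by (rule util_lin[OF I])
  define c where "c t J = Lval IS A (G t) (phi IS A par J (q_out IS A par G J t))" for t J
  have inCo: "phi IS A par J (q_out IS A par G J t) \<in> coPhi IS A par" if "J \<in> IS" for J t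
    unfolding q_out_def cfr_out_sf by (rule kuhn[OF that local_beh])
  have crng: "c t j - c t k \<le> U" if "t < T" "j \<in> IS" "k \<in> IS" for t j k
    unfolding c_def using hyp that inCo by blast
  have phiout: "Lval IS A (G t) (phi_out IS A par G t) = (\<Sum>J\<in>IS. lam_out IS A par G t J * c t J)" for t
    unfolding phi_out_def c_def by (rule Lval_lin[OF finIS])
  have split: "Lval IS A (G t) (phi IS A par I \<pi>) - Lval IS A (G t) (phi_out IS A par G t) =
     (?l t \<pi> - ?l t (cfr_out IS A par I ?l t)) + (c t I - (\<Sum>J\<in>IS. lam_out IS A par G t J * c t J))" for t
    unfolding phiout by (simp add: util_I_def c_def q_out_def)
  have rng: "\<forall>t<T. \<forall>K\<in>sub I. \<forall>a\<in>A K. \<forall>b\<in>A K.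
       cfv IS A par (gT I ?l t) (cfr_local IS A par I ?l t) K a -
       cfv IS A par (gT I ?l t) (cfr_local IS A par I ?l t) K b \<le> U"
  proof (intro allI impI ballI)
    fix t K a b assume t: "t < T" and K: "K \<in> sub I" and a: "a \<in> A K" and b: "b \<in> A K"
    let ?x = "cfr_local IS A par I ?l t"
    have "cfv IS A par (gT I ?l t) ?x K a - cfv IS A par (gT I ?l t) ?x K b =
          (\<Sum>s\<in>SB I. gg t s * (sf I (yv K a ?x) s - sf I (yv K b ?x) s))"
      by (rule cf_diff[OF I gT_eq[OF lin] K a b])
    also have "\<dots> = ?l t (sf I (yv K a ?x)) - ?l t (sf I (yv K b ?x))"
      unfolding lin sum_subtractf[symmetric] right_diff_distrib ..
    also have "\<dots> = Lval IS A (G t) (phi IS A par I (sf I (yv K a ?x))) - Lval IS A (G t) (phi IS A par I (sf I (yv K b ?x)))"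
      by (simp add: util_I_def)
    also have "\<dots> \<le> U"
      using hyp t kuhn[OF I yv_beh[OF K a local_beh]] kuhn[OF I yv_beh[OF K b local_beh]] by blast
    finally show "cfv IS A par (gT I ?l t) ?x K a - cfv IS A par (gT I ?l t) ?x K b \<le> U" .
  qed
  have cfr: "(\<Sum>t<T. ?l t \<pi> - ?l t (cfr_out IS A par I ?l t)) \<le> U * real (card (SB I)) * sqrt (real T)"
    using cfr_bound[OF I lin pi U rng] sum_sqrt_le[OF U, where Ih=I and T=T] by linarith
  define Rd where "Rd = rm_cumreg IS (util_Delta IS A par G)"
  have uD: "util_Delta IS A par G t lam = (\<Sum>J\<in>IS. lam J * c t J)" for t lam
    by (simp add: util_Delta_def c_def)
  have unit: "util_Delta IS A par G t (unitv j) = c t j" if "j \<in> IS" for t j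
  proof -
    have "util_Delta IS A par G t (unitv j) = (\<Sum>J\<in>IS. if J = j then c t J else 0)"
      unfolding uD unitv_def by (rule sum.cong) auto
    also have "\<dots> = c t j" using that finIS by simp
    finally show ?thesis .
  qed
  have step: "Rd (Suc t) j = Rd t j + (c t j - (\<Sum>k\<in>IS. rm_of IS (Rd t) k * c t k))" if "j \<in> IS" for t j
    unfolding Rd_def using unit[OF that] by (simp add: uD)
  have lam: "lam_out IS A par G t = rm_of IS (Rd t)" for t
    by (simp add: lam_out_def rm_def Rd_def)
  have "(\<Sum>t<T. c t I - (\<Sum>J\<in>IS. lam_out IS A par G t J * c t J)) = (\<Sum>t<T. Rd (Suc t) I - Rd t I)"
    unfolding lam using step[OF I] by simp
  also have "\<dots> = Rd T I - Rd 0 I" by (rule sum_lessThan_telescope)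
  also have "\<dots> = Rd T I" by (simp add: Rd_def)
  also have "\<dots> \<le> U * sqrt (real (card IS) * real T)"
  proof -
    have "\<forall>j\<in>IS. Rd T j \<le> U * sqrt (real (card IS) * real T)"
    proof (rule rm_bound[where c=c])
      show "finite IS" "IS \<noteq> {}" using finIS I by auto
      show "\<forall>j\<in>IS. Rd 0 j = 0" by (simp add: Rd_def)
      show "\<forall>t<T. \<forall>j\<in>IS. Rd (Suc t) j = Rd t j + (c t j - (\<Sum>k\<in>IS. rm_of IS (Rd t) k * c t k))"
        using step by blast
      show "\<forall>t<T. \<forall>j\<in>IS. \<forall>k\<in>IS. c t j - c t k \<le> U" using crng by blast
    qed (rule U)
    then show ?thesis using I by blast
  qed
  finally have rmb: "(\<Sum>t<T. c t I - (\<Sum>J\<in>IS. lam_out IS A par G t J * c t J)) \<le> U * sqrt (real (card IS) * real T)" .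
  have "(\<Sum>t<T. Lval IS A (G t) (phi IS A par I \<pi>) - Lval IS A (G t) (phi_out IS A par G t)) =
        (\<Sum>t<T. ?l t \<pi> - ?l t (cfr_out IS A par I ?l t)) + (\<Sum>t<T. c t I - (\<Sum>J\<in>IS. lam_out IS A par G t J * c t J))"
    unfolding split sum.distrib ..
  also have "\<dots> \<le> U * real (card (SB I)) * sqrt (real T) + U * sqrt (real (card IS) * real T)"
    using cfr rmb by linarith
  also have "\<dots> \<le> U * real (card (seqs IS A)) * sqrt (real T) + U * real (card (seqs IS A)) * sqrt (real T)"
  proof (intro add_mono)
    show "U * real (card (SB I)) * sqrt (real T) \<le> U * real (card (seqs IS A)) * sqrt (real T)"
      using card_SB_le[of I] U by (intro mult_right_mono mult_left_mono) auto
    have "sqrt (real (card IS)) \<le> real (card (seqs IS A))"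
      using sqrt_nat_le[of "card IS"] card_IS_le by linarith
    then have "sqrt (real (card IS)) * sqrt (real T) \<le> real (card (seqs IS A)) * sqrt (real T)"
      by (intro mult_right_mono) auto
    then show "U * sqrt (real (card IS) * real T) \<le> U * real (card (seqs IS A)) * sqrt (real T)"
      using U by (simp add: real_sqrt_mult mult.assoc mult_left_mono)
  qed
  also have "\<dots> = 2 * U * real (card (seqs IS A)) * sqrt (real T)" by simp
  finally show ?thesis .
qed

end

theorem theorem2:
  fixes IS :: "'i set" and A :: "'i \<Rightarrow> 'a set" and par :: "'i \<Rightarrow> ('i \<times> 'a) option"
    and G :: "nat \<Rightarrow> ('i \<times> 'a) option \<Rightarrow> ('i \<times> 'a) option \<Rightarrow> real"
    and U :: real and T :: nat
  assumes "tfdp IS A par" and "IS \<noteq> {}"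
    and "\<forall>t<T. \<forall>\<phi>\<in>coPhi IS A par. \<forall>\<phi>'\<in>coPhi IS A par.
            Lval IS A (G t) \<phi> - Lval IS A (G t) \<phi>' \<le> U"
  shows "\<forall>\<phi>s\<in>coPhi IS A par.
           (\<Sum>t<T. Lval IS A (G t) \<phi>s - Lval IS A (G t) (phi_out IS A par G t))
             \<le> 2 * U * real (card (seqs IS A)) * sqrt (real T)"
proof
  interpret tf IS A par by unfold_locales (rule assms(1))
  fix \<phi>s assume ps: "\<phi>s \<in> coPhi IS A par"
  obtain n :: nat and w M where phs: "\<phi>s = (\<lambda>r c. \<Sum>k<n. w k * M k r c)"
    and wM: "\<forall>k<n. 0 \<le> w k \<and> M k \<in> Phi IS A par" and w1: "(\<Sum>k<n. w k) = 1"
    using ps unfolding coPhi_def mem_Collect_eq by blast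
  show "(\<Sum>t<T. Lval IS A (G t) \<phi>s - Lval IS A (G t) (phi_out IS A par G t))
             \<le> 2 * U * real (card (seqs IS A)) * sqrt (real T)"
  proof (cases "T = 0")
    case True then show ?thesis by simp
  next
    case False
    then have "0 < T" by simp
    then have U: "0 \<le> U" using assms(3) ps by force
    let ?B = "2 * U * real (card (seqs IS A)) * sqrt (real T)"
    have each: "(\<Sum>t<T. Lval IS A (G t) (M k) - Lval IS A (G t) (phi_out IS A par G t)) \<le> ?B" if k: "k < n" for k
    proof -
      obtain I p where "M k = phi IS A par I p" "I \<in> IS" "p \<in> Piset IS A par I"
        using wM k unfolding Phi_def by blast
      then show ?thesis using per_bound[OF _ _ U assms(3)] by simp
    qed
    have "(\<Sum>t<T. Lval IS A (G t) \<phi>s - Lval IS A (G t) (phi_out IS A par G t)) =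
          (\<Sum>t<T. \<Sum>k<n. w k * (Lval IS A (G t) (M k) - Lval IS A (G t) (phi_out IS A par G t)))"
    proof (rule sum.cong[OF refl])
      fix t
      have "Lval IS A (G t) \<phi>s = (\<Sum>k<n. w k * Lval IS A (G t) (M k))"
        unfolding phs by (rule Lval_lin) simp
      moreover have "(\<Sum>k<n. w k * Lval IS A (G t) (phi_out IS A par G t)) = Lval IS A (G t) (phi_out IS A par G t)"
        using w1 by (simp add: sum_distrib_right[symmetric])
      ultimately show "Lval IS A (G t) \<phi>s - Lval IS A (G t) (phi_out IS A par G t) =
          (\<Sum>k<n. w k * (Lval IS A (G t) (M k) - Lval IS A (G t) (phi_out IS A par G t)))"
        by (simp add: right_diff_distrib sum_subtractf)
    qed
    also have "\<dots> = (\<Sum>k<n. w k * (\<Sum>t<T. Lval IS A (G t) (M k) - Lval IS A (G t) (phi_out IS A par G t)))"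
      by (simp add: sum_distrib_left sum.swap[of _ "{..<n}"])
    also have "\<dots> \<le> (\<Sum>k<n. w k * ?B)"
      using each wM by (intro sum_mono mult_left_mono) auto
    also have "\<dots> = ?B" using w1 by (simp add: sum_distrib_right[symmetric])
    finally show ?thesis .
  qed
qed


end
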